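(* The functor $\iota\colon \mathcal{D}iag \to \mathcal{D}iag^S$ induced by the inclusion of generators $\mathcal{D}_0 \hookrightarrow \mathcal{D}^S_0$ is an isomorphism of categories.
   Context: Monoidal categories are strict. In a braided monoidal category with braiding $\tau$, a coalgebra is an object $C$ with $\Delta\colon C\to C\otimes C$, $\varepsilon\colon C\to\mathbf 1$ satisfying $(\mathrm{id}\otimes\Delta)\Delta=(\Delta\otimes\mathrm{id})\Delta$ and $(\varepsilon\otimes\mathrm{id})\Delta=\mathrm{id}=(\mathrm{id}\otimes\varepsilon)\Delta$; if $C,C'$ are coalgebras, $C\otimes C'$ is a coalgebra with counit $\varepsilon\otimes\varepsilon'$ and coproduct $(\mathrm{id}_C\otimes\tau_{C,C'}\otimes\mathrm{id}_{C'})(\Delta\otimes\Delta')$; hence $C^{\otimes n}$ is a coalgebra for all $n\ge 0$. For a coalgebra $C$ in a braided category $\mathcal{C}$, the convolution category $\mathrm{Conv}_{\mathcal C}(C,\mathbf 1)$ has objects the non-negative integers, no morphisms $m\to n$ for $m\ne n$, and $\mathrm{End}(n)=\mathrm{Hom}_{\mathcal C}(C^{\otimes n},\mathbf 1)$ with composition $f\circ g=(f\otimes g)\Delta_{C^{\otimes n}}$ and identity $\varepsilon^{\otimes n}$. Let $\mathcal{D}_0$ be the braided strict monoidal category freely generated by one object $*$ and morphisms $\Delta\colon *\to *\otimes *$, $\varepsilon\colon *\to\mathbf 1$, $\omega_+,\omega_-\colon *\otimes*\to\mathbf 1$, $\theta_+,\theta_-\colon *\to\mathbf 1$; let $\mathcal{D}$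 be its quotient by the relations $(\mathrm{id}_*\otimes\Delta)\Delta=(\Delta\otimes\mathrm{id}_* )\Delta$ and $(\mathrm{id}_*\otimes\varepsilon)\Delta=\mathrm{id}_*=(\varepsilon\otimes\mathrm{id}_* )\Delta$ (i.e. by the smallest congruence compatible with composition and tensor product containing them). Let $\mathcal{D}^S_0$ be the braided strict monoidal category freely generated by $*$ and the same morphisms together with two further morphisms $S, S^{-1}\colon *\to *$ (formal generators), and let $\mathcal{D}^S$ be its quotient by the two relations above together with: $SS^{-1}=\mathrm{id}_*=S^{-1}S$; $\Delta S=(S\otimes S)\tau_{*,*}\Delta$; $\varepsilon S=\varepsilon$; $\theta_\pm S=\theta_\pm$; $\omega_+(S\otimes\mathrm{id}_* )=\omega_-=\omega_+(\mathrm{id}_*\otimes S)$; $\omega_+(S^{-1}\otimes\mathrm{id}_* )=\omega_-\tau_{*,*}=\omega_+(\mathrm{id}_*\otimes S^{-1})$, where $\tau_{*,*}$ is the braiding of $*$ with itself. In $\mathcal D$ and $\mathcal D^S$, $( *,\Delta,\varepsilon)$ is a coalgebra. Define $\mathcal{D}iag=\mathrm{Conv}_{\mathcal D}( *,\mathbf 1)$ and $\mathcal{D}iag^S=\mathrm{Conv}_{\mathcal D^S}( *,\mathbf 1)$. The inclusion $\mathcal D_0\hookrightarrow\mathcal D^S_0$ induces a functor $\mathcal D\to\mathcal D^S$ and hence a functor $\iota\colon\mathcal{D}iag\to\mathcal{D}iag^S$ which is the identity on objects. *)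

theory Defs
  imports Main
begin

text \<open>Objects of a braided strict monoidal category freely generated by one object * are
  the tensor powers of *, identified with natural numbers (tensor = addition).
  Comp f g means f after g.\<close>

datatype 'g tm =
    Gen 'g
  | Id nat
  | Comp "'g tm" "'g tm"
  | Tens "'g tm" "'g tm"
  | Br nat nat
  | BrInv nat nat

fun tmty :: "('g \<Rightarrow> nat \<times> nat) \<Rightarrow> 'g tm \<Rightarrow> (nat \<times> nat) option" where
  "tmty ty (Gen g) = Some (ty g)"
| "tmty ty (Id n) = Some (n, n)"
| "tmty ty (Comp f g) =
     (case (tmty ty f, tmty ty g) of
        (Some (a, b), Some (c, d)) \<Rightarrow> (if d = a then Some (c, b) else None)
      | _ \<Rightarrow> None)"
| "tmty ty (Tens f g) =
     (case (tmty ty f, tmty ty g) of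
        (Some (a, b), Some (c, d)) \<Rightarrow> Some (a + c, b + d)
      | _ \<Rightarrow> None)"
| "tmty ty (Br m n) = Some (m + n, n + m)"
| "tmty ty (BrInv m n) = Some (n + m, m + n)"

inductive beq :: "('g \<Rightarrow> nat \<times> nat) \<Rightarrow> ('g tm \<times> 'g tm) set \<Rightarrow> 'g tm \<Rightarrow> 'g tm \<Rightarrow> bool"
  for ty R where
  refl: "beq ty R t t"
| sym: "beq ty R s t \<Longrightarrow> beq ty R t s"
| trans: "beq ty R s t \<Longrightarrow> beq ty R t u \<Longrightarrow> beq ty R s u"
| comp_cong: "beq ty R s s' \<Longrightarrow> beq ty R t t' \<Longrightarrow> beq ty R (Comp s t) (Comp s' t')"
| tens_cong: "beq ty R s s' \<Longrightarrow> beq ty R t t' \<Longrightarrow> beq ty R (Tens s t) (Tens s' t')"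
| rel: "(s, t) \<in> R \<Longrightarrow> beq ty R s t"
| id_l: "tmty ty f = Some (n, m) \<Longrightarrow> beq ty R (Comp (Id m) f) f"
| id_r: "tmty ty f = Some (n, m) \<Longrightarrow> beq ty R (Comp f (Id n)) f"
| assoc: "tmty ty f = Some (c, d) \<Longrightarrow> tmty ty g = Some (b, c) \<Longrightarrow> tmty ty h = Some (a, b) \<Longrightarrow>
          beq ty R (Comp (Comp f g) h) (Comp f (Comp g h))"
| tens_assoc: "beq ty R (Tens (Tens f g) h) (Tens f (Tens g h))"
| tens_unit_l: "beq ty R (Tens (Id 0) f) f"
| tens_unit_r: "beq ty R (Tens f (Id 0)) f"
| tens_id: "beq ty R (Tens (Id m) (Id n)) (Id (m + n))"
| interchange: "tmty ty f = Some (b, c) \<Longrightarrow> tmty ty f' = Some (a, b) \<Longrightarrow>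
                tmty ty g = Some (e, k) \<Longrightarrow> tmty ty g' = Some (d, e) \<Longrightarrow>
                beq ty R (Comp (Tens f g) (Tens f' g')) (Tens (Comp f f') (Comp g g'))"
| br_inv1: "beq ty R (Comp (Br m n) (BrInv m n)) (Id (n + m))"
| br_inv2: "beq ty R (Comp (BrInv m n) (Br m n)) (Id (m + n))"
| br_nat: "tmty ty f = Some (m, m') \<Longrightarrow> tmty ty g = Some (n, n') \<Longrightarrow>
           beq ty R (Comp (Br m' n') (Tens f g)) (Comp (Tens g f) (Br m n))"
| hex1: "beq ty R (Br (l + m) n) (Comp (Tens (Br l n) (Id m)) (Tens (Id l) (Br m n)))"
| hex2: "beq ty R (Br l (m + n)) (Comp (Tens (Id m) (Br l n)) (Tens (Br l m) (Id n)))"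

definition Hom :: "('g \<Rightarrow> nat \<times> nat) \<Rightarrow> ('g tm \<times> 'g tm) set \<Rightarrow> nat \<Rightarrow> nat \<Rightarrow> 'g tm set set" where
  "Hom ty R n m = {t. tmty ty t = Some (n, m)} // {(s, t). beq ty R s t}"

text \<open>Coproduct of *^n, built as the tensor coalgebra *^n = *^(n-1) \<otimes> *, and counit eps^n.\<close>
fun dpow :: "'g \<Rightarrow> nat \<Rightarrow> 'g tm" where
  "dpow d 0 = Id 0"
| "dpow d (Suc n) = Comp (Tens (Tens (Id n) (Br n 1)) (Id 1)) (Tens (dpow d n) (Gen d))"

fun epow :: "'g \<Rightarrow> nat \<Rightarrow> 'g tm" where
  "epow e 0 = Id 0"
| "epow e (Suc n) = Tens (epow e n) (Gen e)"

definition conv_comp :: "('g \<Rightarrow> nat \<times> nat) \<Rightarrow> ('g tm \<times> 'g tm) set \<Rightarrow> 'g \<Rightarrow> nat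
    \<Rightarrow> 'g tm set \<Rightarrow> 'g tm set \<Rightarrow> 'g tm set" where
  "conv_comp ty R d n X Y = {t. \<exists>f\<in>X. \<exists>g\<in>Y. beq ty R (Comp (Tens f g) (dpow d n)) t}"

definition conv_id :: "('g \<Rightarrow> nat \<times> nat) \<Rightarrow> ('g tm \<times> 'g tm) set \<Rightarrow> 'g \<Rightarrow> nat \<Rightarrow> 'g tm set" where
  "conv_id ty R e n = {t. beq ty R (epow e n) t}"

datatype gen0 = G_Delta | G_Eps | G_OmP | G_OmM | G_ThP | G_ThM

fun ty0 :: "gen0 \<Rightarrow> nat \<times> nat" where
  "ty0 G_Delta = (1, 2)"
| "ty0 G_Eps = (1, 0)"
| "ty0 G_OmP = (2, 0)"
| "ty0 G_OmM = (2, 0)"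
| "ty0 G_ThP = (1, 0)"
| "ty0 G_ThM = (1, 0)"

datatype genS = G0 gen0 | G_S | G_Sinv

fun tyS :: "genS \<Rightarrow> nat \<times> nat" where
  "tyS (G0 g) = ty0 g"
| "tyS G_S = (1, 1)"
| "tyS G_Sinv = (1, 1)"

definition coalg_rels :: "'g \<Rightarrow> 'g \<Rightarrow> ('g tm \<times> 'g tm) set" where
  "coalg_rels d e =
    { (Comp (Tens (Id 1) (Gen d)) (Gen d), Comp (Tens (Gen d) (Id 1)) (Gen d)),
      (Comp (Tens (Id 1) (Gen e)) (Gen d), Id 1),
      (Comp (Tens (Gen e) (Id 1)) (Gen d), Id 1) }"

definition R_D :: "(gen0 tm \<times> gen0 tm) set" where
  "R_D = coalg_rels G_Delta G_Eps"

definition R_DS :: "(genS tm \<times> genS tm) set" where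
  "R_DS = coalg_rels (G0 G_Delta) (G0 G_Eps) \<union>
    { (Comp (Gen G_S) (Gen G_Sinv), Id 1),
      (Comp (Gen G_Sinv) (Gen G_S), Id 1),
      (Comp (Gen (G0 G_Delta)) (Gen G_S),
         Comp (Tens (Gen G_S) (Gen G_S)) (Comp (Br 1 1) (Gen (G0 G_Delta)))),
      (Comp (Gen (G0 G_Eps)) (Gen G_S), Gen (G0 G_Eps)),
      (Comp (Gen (G0 G_ThP)) (Gen G_S), Gen (G0 G_ThP)),
      (Comp (Gen (G0 G_ThM)) (Gen G_S), Gen (G0 G_ThM)),
      (Comp (Gen (G0 G_OmP)) (Tens (Gen G_S) (Id 1)), Gen (G0 G_OmM)),
      (Comp (Gen (G0 G_OmP)) (Tens (Id 1) (Gen G_S)), Gen (G0 G_OmM)),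
      (Comp (Gen (G0 G_OmP)) (Tens (Gen G_Sinv) (Id 1)), Comp (Gen (G0 G_OmM)) (Br 1 1)),
      (Comp (Gen (G0 G_OmP)) (Tens (Id 1) (Gen G_Sinv)), Comp (Gen (G0 G_OmM)) (Br 1 1)) }"

definition EndD :: "nat \<Rightarrow> gen0 tm set set" where "EndD n = Hom ty0 R_D n 0"
definition EndDS :: "nat \<Rightarrow> genS tm set set" where "EndDS n = Hom tyS R_DS n 0"
definition compD where "compD n = conv_comp ty0 R_D G_Delta n"
definition compDS where "compDS n = conv_comp tyS R_DS (G0 G_Delta) n"
definition idD where "idD n = conv_id ty0 R_D G_Eps n"
definition idDS where "idDS n = conv_id tyS R_DS (G0 G_Eps) n"

definition iota :: "gen0 tm set \<Rightarrow> genS tm set" where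
  "iota X = {t. \<exists>s\<in>X. beq tyS R_DS (map_tm G0 s) t}"

end

theory Submission
  imports Defs
begin

declare beq.trans[trans]

fun src :: "('g \<Rightarrow> nat \<times> nat) \<Rightarrow> 'g tm \<Rightarrow> nat" where
  "src ty (Gen g) = fst (ty g)"
| "src ty (Id n) = n"
| "src ty (Comp f g) = src ty g"
| "src ty (Tens f g) = src ty f + src ty g"
| "src ty (Br m n) = m + n"
| "src ty (BrInv m n) = n + m"

lemma tmty_src: "tmty ty t = Some (a, b) \<Longrightarrow> src ty t = a"
  by (induction t arbitrary: a b) (auto split: option.splits prod.splits if_splits)

lemma tmty_Comp_E:
  assumes "tmty ty (Comp f g) = Some (a, b)"
  obtains c where "tmty ty g = Some (a, c)" "tmty ty f = Some (c, b)"
  using assms by (auto split: option.splits prod.splits if_splits)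

lemma tmty_Tens_E:
  assumes "tmty ty (Tens f g) = Some (a, b)"
  obtains a1 b1 a2 b2 where "tmty ty f = Some (a1, b1)" "tmty ty g = Some (a2, b2)"
     "a = a1 + a2" "b = b1 + b2"
  using assms by (auto split: option.splits prod.splits if_splits)

lemma beq_tmty:
  assumes "beq ty R s t" and "\<forall>(x, y)\<in>R. tmty ty x = tmty ty y"
  shows "tmty ty s = tmty ty t"
  using assms by (induction rule: beq.induct) (auto split: option.splits prod.splits if_splits)

context fixes ty :: "'g \<Rightarrow> nat \<times> nat" and R :: "('g tm \<times> 'g tm) set"
begin

abbreviation eqv (infix "\<approx>" 50) where "s \<approx> t \<equiv> beq ty R s t"

lemma bs: "s \<approx> t \<Longrightarrow> t \<approx> s" by (rule beq.sym)

lemma cl: "s \<approx> s' \<Longrightarrow> Comp s t \<approx> Comp s' t" by (rule beq.comp_cong) (auto intro: beq.refl)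
lemma cr: "t \<approx> t' \<Longrightarrow> Comp s t \<approx> Comp s t'" by (rule beq.comp_cong) (auto intro: beq.refl)
lemma tl: "s \<approx> s' \<Longrightarrow> Tens s t \<approx> Tens s' t" by (rule beq.tens_cong) (auto intro: beq.refl)
lemma tr: "t \<approx> t' \<Longrightarrow> Tens s t \<approx> Tens s t'" by (rule beq.tens_cong) (auto intro: beq.refl)

lemma idl: "tmty ty (Comp (Id m) f) \<noteq> None \<Longrightarrow> Comp (Id m) f \<approx> f"
  by (cases "tmty ty f") (auto split: if_splits intro: beq.id_l)
lemma idr: "tmty ty (Comp f (Id n)) \<noteq> None \<Longrightarrow> Comp f (Id n) \<approx> f"
  by (cases "tmty ty f") (auto split: if_splits intro: beq.id_r)
lemma asc: "tmty ty (Comp (Comp f g) h) \<noteq> None \<Longrightarrow> Comp (Comp f g) h \<approx> Comp f (Comp g h)"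
  by (auto split: option.splits prod.splits if_splits intro: beq.assoc)
lemma ich: "tmty ty (Tens (Comp f f') (Comp g g')) \<noteq> None \<Longrightarrow>
   Comp (Tens f g) (Tens f' g') \<approx> Tens (Comp f f') (Comp g g')"
  by (auto split: option.splits prod.splits if_splits intro: beq.interchange)

lemma Tid: "Tens (Id m) (Id n) \<approx> Id (m+n)" by (rule beq.tens_id)
lemma Tid11: "Tens (Id 1) (Id 1) \<approx> Id 2" by (metis beq.tens_id one_add_one)

lemma brnat: "tmty ty f = Some (m, m') \<Longrightarrow> tmty ty g = Some (n, n') \<Longrightarrow>
           Comp (Br m' n') (Tens f g) \<approx> Comp (Tens g f) (Br m n)"
  by (rule beq.br_nat)

lemma brinvnat:
  assumes f: "tmty ty f = Some (m, m')" and g: "tmty ty g = Some (n, n')"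
  shows "Comp (BrInv m' n') (Tens g f) \<approx> Comp (Tens f g) (BrInv m n)"
proof -
  have "Comp (BrInv m' n') (Tens g f) \<approx> Comp (Comp (BrInv m' n') (Tens g f)) (Id (n+m))"
    by (rule bs, rule idr) (simp add: f g)
  also have "\<dots> \<approx> Comp (Comp (BrInv m' n') (Tens g f)) (Comp (Br m n) (BrInv m n))"
    by (rule cr, rule bs, rule beq.br_inv1)
  also have "\<dots> \<approx> Comp (Comp (Comp (BrInv m' n') (Tens g f)) (Br m n)) (BrInv m n)"
    by (rule bs, rule asc) (simp add: f g)
  also have "\<dots> \<approx> Comp (Comp (BrInv m' n') (Comp (Tens g f) (Br m n))) (BrInv m n)"
    by (rule cl, rule asc) (simp add: f g)
  also have "\<dots> \<approx> Comp (Comp (BrInv m' n') (Comp (Br m' n') (Tens f g))) (BrInv m n)"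
    by (rule cl, rule cr, rule bs, rule brnat[OF f g])
  also have "\<dots> \<approx> Comp (Comp (Comp (BrInv m' n') (Br m' n')) (Tens f g)) (BrInv m n)"
    by (rule cl, rule bs, rule asc) (simp add: f g)
  also have "\<dots> \<approx> Comp (Comp (Id (m'+n')) (Tens f g)) (BrInv m n)"
    by (rule cl, rule cl, rule beq.br_inv2)
  also have "\<dots> \<approx> Comp (Tens f g) (BrInv m n)"
    by (rule cl, rule idl) (simp add: f g)
  finally show ?thesis .
qed

end

fun itc :: "'g tm \<Rightarrow> nat \<Rightarrow> nat \<Rightarrow> 'g tm" where
  "itc P u 0 = Id u" | "itc P u (Suc n) = Comp P (itc P u n)"

definition pw :: "'g tm \<Rightarrow> 'g tm \<Rightarrow> nat \<Rightarrow> int \<Rightarrow> 'g tm" where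
  "pw P Q u a = (if 0 \<le> a then itc P u (nat a) else itc Q u (nat (-a)))"

lemma pw0[simp]: "pw P Q u 0 = Id u" by (simp add: pw_def)

lemma map_itc: "map_tm h (itc P u n) = itc (map_tm h P) u n" by (induction n) auto
lemma map_pw: "map_tm h (pw P Q u a) = pw (map_tm h P) (map_tm h Q) u a" by (simp add: pw_def map_itc)

context fixes ty :: "'g \<Rightarrow> nat \<times> nat" and R :: "('g tm \<times> 'g tm) set"
  and P Q :: "'g tm" and u :: nat
  assumes tP: "tmty ty P = Some (u, u)" and tQ: "tmty ty Q = Some (u, u)"
  and PQ: "beq ty R (Comp P Q) (Id u)" and QP: "beq ty R (Comp Q P) (Id u)"
begin

abbreviation eqv2 (infix "\<approx>" 50) where "s \<approx> t \<equiv> beq ty R s t"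

lemma tmty_itc: "tmty ty (itc P u n) = Some (u, u)" "tmty ty (itc Q u n) = Some (u, u)"
  by (induction n) (auto simp: tP tQ)

lemma tmty_pw: "tmty ty (pw P Q u a) = Some (u, u)"
  by (simp add: pw_def tmty_itc)

lemma pw_P: "Comp P (pw P Q u a) \<approx> pw P Q u (a + 1)"
proof (cases "0 \<le> a")
  case True
  then have "nat (a+1) = Suc (nat a)" by simp
  then show ?thesis using True by (simp add: pw_def beq.refl)
next
  case False
  then obtain m where m: "nat (-a) = Suc m" by (cases "nat (-a)") auto
  have e: "pw P Q u (a+1) = itc Q u m"
  proof (cases "0 \<le> a + 1")
    case True then have "m = 0" "a + 1 = 0" using m False by linarith+
    then show ?thesis by (simp add: pw_def)
  next
    case F: False then have "nat (-(a+1)) = m" using m by linarith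
    then show ?thesis using F by (simp add: pw_def)
  qed
  have "Comp P (pw P Q u a) = Comp P (Comp Q (itc Q u m))" using False m by (simp add: pw_def)
  also have "\<dots> \<approx> Comp (Comp P Q) (itc Q u m)" by (rule bs, rule asc) (simp add: tP tQ tmty_itc)
  also have "\<dots> \<approx> Comp (Id u) (itc Q u m)" by (rule cl, rule PQ)
  also have "\<dots> \<approx> itc Q u m" by (rule idl) (simp add: tmty_itc)
  finally show ?thesis using e by simp
qed

lemma pw_Q: "Comp Q (pw P Q u a) \<approx> pw P Q u (a - 1)"
proof (cases "0 < a")
  case False
  then have "nat (-(a-1)) = Suc (nat (-a))" by simp
  then show ?thesis using False by (simp add: pw_def beq.refl)
next
  case True
  then obtain m where m: "nat a = Suc m" by (cases "nat a") auto
  have e: "pw P Q u (a-1) = itc P u m"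
  proof -
    have "nat (a-1) = m" using m True by linarith
    then show ?thesis using True by (simp add: pw_def)
  qed
  have "Comp Q (pw P Q u a) = Comp Q (Comp P (itc P u m))" using True m by (simp add: pw_def)
  also have "\<dots> \<approx> Comp (Comp Q P) (itc P u m)" by (rule bs, rule asc) (simp add: tP tQ tmty_itc)
  also have "\<dots> \<approx> Comp (Id u) (itc P u m)" by (rule cl, rule QP)
  also have "\<dots> \<approx> itc P u m" by (rule idl) (simp add: tmty_itc)
  finally show ?thesis using e by simp
qed

lemma pw_add: "Comp (pw P Q u a) (pw P Q u b) \<approx> pw P Q u (a + b)"
proof (induction a rule: int_induct[where k=0])
  case base
  then show ?case by (simp, rule idl) (simp add: tmty_pw)
next
  case (step1 i)
  have "Comp (pw P Q u (i+1)) (pw P Q u b) \<approx> Comp (Comp P (pw P Q u i)) (pw P Q u b)"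
    by (rule cl, rule bs, rule pw_P)
  also have "\<dots> \<approx> Comp P (Comp (pw P Q u i) (pw P Q u b))" by (rule asc) (simp add: tP tmty_pw)
  also have "\<dots> \<approx> Comp P (pw P Q u (i + b))" by (rule cr, rule step1.IH)
  also have "\<dots> \<approx> pw P Q u (i + b + 1)" by (rule pw_P)
  finally show ?case by (simp add: algebra_simps)
next
  case (step2 i)
  have "Comp (pw P Q u (i-1)) (pw P Q u b) \<approx> Comp (Comp Q (pw P Q u i)) (pw P Q u b)"
    by (rule cl, rule bs, rule pw_Q)
  also have "\<dots> \<approx> Comp Q (Comp (pw P Q u i) (pw P Q u b))" by (rule asc) (simp add: tQ tmty_pw)
  also have "\<dots> \<approx> Comp Q (pw P Q u (i + b))" by (rule cr, rule step2.IH)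
  also have "\<dots> \<approx> pw P Q u (i + b - 1)" by (rule pw_Q)
  finally show ?case by (simp add: algebra_simps)
qed

end


definition bp :: "int \<Rightarrow> 'g tm" where "bp = pw (Br 1 1) (BrInv 1 1) 2"

lemma map_bp: "map_tm h (bp a) = bp a" by (simp add: bp_def map_pw)

context fixes ty :: "'g \<Rightarrow> nat \<times> nat" and R :: "('g tm \<times> 'g tm) set"
begin

abbreviation eqv3 (infix "\<approx>" 50) where "s \<approx> t \<equiv> beq ty R s t"

lemma tBr[simp]: "tmty ty (Br 1 1) = Some (2, 2)" "tmty ty (BrInv 1 1) = Some (2, 2)" by simp_all

lemma BrBrInv: "Comp (Br 1 1) (BrInv 1 1) \<approx> Id 2" by (metis beq.br_inv1 one_add_one)
lemma BrInvBr: "Comp (BrInv 1 1) (Br 1 1) \<approx> Id 2" by (metis beq.br_inv2 one_add_one)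

lemma tmty_bp[simp]: "tmty ty (bp a) = Some (2, 2)"
  unfolding bp_def by (rule tmty_pw[OF tBr BrBrInv BrInvBr])
lemma bp_succ: "Comp (Br 1 1) (bp a) \<approx> bp (a + 1)"
  unfolding bp_def by (rule pw_P[OF tBr BrBrInv BrInvBr])
lemma bp_pred: "Comp (BrInv 1 1) (bp a) \<approx> bp (a - 1)"
  unfolding bp_def by (rule pw_Q[OF tBr BrBrInv BrInvBr])
lemma bp_add: "Comp (bp a) (bp b) \<approx> bp (a + b)"
  unfolding bp_def by (rule pw_add[OF tBr BrBrInv BrInvBr])
lemma bp1: "bp 1 \<approx> Br 1 1"
  unfolding bp_def pw_def by (simp, rule idr) simp

lemma swapstep:
  assumes B: "tmty ty B = Some (2, 2)" and X: "tmty ty X = Some (2, 2)"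
  and f: "tmty ty f = Some (1,1)" and g: "tmty ty g = Some (1,1)"
  and f': "tmty ty f' = Some (1,1)" and g': "tmty ty g' = Some (1,1)"
  and Bn: "Comp B (Tens f' g') \<approx> Comp (Tens g' f') B"
  and Xn: "Comp X (Tens f g) \<approx> Comp (Tens f' g') X"
  shows "Comp (Comp B X) (Tens f g) \<approx> Comp (Tens g' f') (Comp B X)"
proof -
  have "Comp (Comp B X) (Tens f g) \<approx> Comp B (Comp X (Tens f g))" by (rule asc) (simp add: B X f g)
  also have "\<dots> \<approx> Comp B (Comp (Tens f' g') X)" by (rule cr, rule Xn)
  also have "\<dots> \<approx> Comp (Comp B (Tens f' g')) X" by (rule bs, rule asc) (simp add: B X f' g')
  also have "\<dots> \<approx> Comp (Comp (Tens g' f') B) X" by (rule cl, rule Bn)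
  also have "\<dots> \<approx> Comp (Tens g' f') (Comp B X)" by (rule asc) (simp add: B X f' g')
  finally show ?thesis .
qed

lemma bp_nat:
  assumes f: "tmty ty f = Some (1,1)" and g: "tmty ty g = Some (1,1)"
  shows "Comp (bp a) (Tens f g) \<approx> Comp (if even a then Tens f g else Tens g f) (bp a)"
proof (induction a rule: int_induct[where k=0])
  case base
  have "Comp (bp 0) (Tens f g) \<approx> Tens f g" by (simp add: bp_def, rule idl) (simp add: f g)
  also have "\<dots> \<approx> Comp (Tens f g) (bp 0)" by (rule bs, simp add: bp_def, rule idr) (simp add: f g)
  finally show ?case by simp
next
  case (step1 i)
  have Bn: "Comp (Br 1 1) (Tens x y) \<approx> Comp (Tens y x) (Br 1 1)"
    if "tmty ty x = Some (1,1)" "tmty ty y = Some (1,1)" for x y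
    by (rule brnat) (simp_all add: that)
  have e: "bp (i+1) \<approx> Comp (Br 1 1) (bp i)" by (rule bs, rule bp_succ)
  have "Comp (bp (i+1)) (Tens f g) \<approx> Comp (Comp (Br 1 1) (bp i)) (Tens f g)" by (rule cl, rule e)
  also have "\<dots> \<approx> Comp (if even (i+1) then Tens f g else Tens g f) (Comp (Br 1 1) (bp i))"
  proof (cases "even i")
    case True
    then have ih: "Comp (bp i) (Tens f g) \<approx> Comp (Tens f g) (bp i)" using step1.IH by simp
    show ?thesis using True swapstep[OF tBr(1) tmty_bp f g f g Bn[OF f g] ih] by simp
  next
    case False
    then have ih: "Comp (bp i) (Tens f g) \<approx> Comp (Tens g f) (bp i)" using step1.IH by simp
    show ?thesis using False swapstep[OF tBr(1) tmty_bp f g g f Bn[OF g f] ih] by simp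
  qed
  also have "\<dots> \<approx> Comp (if even (i+1) then Tens f g else Tens g f) (bp (i+1))" by (rule cr, rule bs, rule e)
  finally show ?case .
next
  case (step2 i)
  have Bn: "Comp (BrInv 1 1) (Tens x y) \<approx> Comp (Tens y x) (BrInv 1 1)"
    if "tmty ty x = Some (1,1)" "tmty ty y = Some (1,1)" for x y
    using brinvnat[where f=y and m=1 and m'=1 and g=x and n=1 and n'=1] that by simp
  have e: "bp (i-1) \<approx> Comp (BrInv 1 1) (bp i)" by (rule bs, rule bp_pred)
  have "Comp (bp (i-1)) (Tens f g) \<approx> Comp (Comp (BrInv 1 1) (bp i)) (Tens f g)" by (rule cl, rule e)
  also have "\<dots> \<approx> Comp (if even (i-1) then Tens f g else Tens g f) (Comp (BrInv 1 1) (bp i))"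
  proof (cases "even i")
    case True
    then have ih: "Comp (bp i) (Tens f g) \<approx> Comp (Tens f g) (bp i)" using step2.IH by simp
    show ?thesis using True swapstep[OF tBr(2) tmty_bp f g f g Bn[OF f g] ih] by simp
  next
    case False
    then have ih: "Comp (bp i) (Tens f g) \<approx> Comp (Tens g f) (bp i)" using step2.IH by simp
    show ?thesis using False swapstep[OF tBr(2) tmty_bp f g g f Bn[OF g f] ih] by simp
  qed
  also have "\<dots> \<approx> Comp (if even (i-1) then Tens f g else Tens g f) (bp (i-1))" by (rule cr, rule bs, rule e)
  finally show ?case .
qed

end


context fixes ty :: "'g \<Rightarrow> nat \<times> nat" and R :: "('g tm \<times> 'g tm) set"
begin

abbreviation eqv4 (infix "\<approx>" 50) where "s \<approx> t \<equiv> beq ty R s t"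

lemma Br10: "Br 1 0 \<approx> Id 1"
proof -
  have h: "Br 1 0 \<approx> Comp (Br 1 0) (Br 1 0)"
  proof -
    have "Br 1 0 \<approx> Comp (Tens (Id 0) (Br 1 0)) (Tens (Br 1 0) (Id 0))"
      using beq.hex2[of ty R 1 0 0] by simp
    also have "\<dots> \<approx> Comp (Br 1 0) (Br 1 0)"
      by (rule beq.comp_cong, rule beq.tens_unit_l, rule beq.tens_unit_r)
    finally show ?thesis .
  qed
  have "Id 1 \<approx> Comp (Br 1 0) (BrInv 1 0)" using beq.br_inv1[of ty R 1 0] by (simp add: bs)
  also have "\<dots> \<approx> Comp (Comp (Br 1 0) (Br 1 0)) (BrInv 1 0)" by (rule cl, rule h)
  also have "\<dots> \<approx> Comp (Br 1 0) (Comp (Br 1 0) (BrInv 1 0))" by (rule asc) simp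
  also have "\<dots> \<approx> Comp (Br 1 0) (Id 1)" by (rule cr) (use beq.br_inv1[of ty R 1 0] in simp)
  also have "\<dots> \<approx> Br 1 0" by (rule idr) simp
  finally show ?thesis by (rule bs)
qed

lemma Br01: "Br 0 1 \<approx> Id 1"
proof -
  have h: "Br 0 1 \<approx> Comp (Br 0 1) (Br 0 1)"
  proof -
    have "Br 0 1 \<approx> Comp (Tens (Br 0 1) (Id 0)) (Tens (Id 0) (Br 0 1))"
      using beq.hex1[of ty R 0 0 1] by simp
    also have "\<dots> \<approx> Comp (Br 0 1) (Br 0 1)"
      by (rule beq.comp_cong, rule beq.tens_unit_r, rule beq.tens_unit_l)
    finally show ?thesis .
  qed
  have "Id 1 \<approx> Comp (Br 0 1) (BrInv 0 1)" using beq.br_inv1[of ty R 0 1] by (simp add: bs)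
  also have "\<dots> \<approx> Comp (Comp (Br 0 1) (Br 0 1)) (BrInv 0 1)" by (rule cl, rule h)
  also have "\<dots> \<approx> Comp (Br 0 1) (Comp (Br 0 1) (BrInv 0 1))" by (rule asc) simp
  also have "\<dots> \<approx> Comp (Br 0 1) (Id 1)" by (rule cr) (use beq.br_inv1[of ty R 0 1] in simp)
  also have "\<dots> \<approx> Br 0 1" by (rule idr) simp
  finally show ?thesis by (rule bs)
qed

lemma cu1:
  assumes e: "tmty ty e = Some (1, 0)" and E: "tmty ty E = Some (1, 2)"
  shows "Comp (Tens (Id 1) e) (Comp (Br 1 1) E) \<approx> Comp (Tens e (Id 1)) E"
proof -
  have "Comp (Tens (Id 1) e) (Comp (Br 1 1) E) \<approx> Comp (Comp (Tens (Id 1) e) (Br 1 1)) E"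
    by (rule bs, rule asc) (simp add: e E)
  also have "\<dots> \<approx> Comp (Comp (Br 0 1) (Tens e (Id 1))) E"
    by (rule cl, rule bs, rule brnat) (simp_all add: e)
  also have "\<dots> \<approx> Comp (Comp (Id 1) (Tens e (Id 1))) E"
    by (rule cl, rule cl, rule Br01)
  also have "\<dots> \<approx> Comp (Tens e (Id 1)) E"
    by (rule cl, rule idl) (simp add: e)
  finally show ?thesis .
qed

lemma cu2:
  assumes e: "tmty ty e = Some (1, 0)" and E: "tmty ty E = Some (1, 2)"
  shows "Comp (Tens e (Id 1)) (Comp (Br 1 1) E) \<approx> Comp (Tens (Id 1) e) E"
proof -
  have "Comp (Tens e (Id 1)) (Comp (Br 1 1) E) \<approx> Comp (Comp (Tens e (Id 1)) (Br 1 1)) E"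
    by (rule bs, rule asc) (simp add: e E)
  also have "\<dots> \<approx> Comp (Comp (Br 1 0) (Tens (Id 1) e)) E"
    by (rule cl, rule bs, rule brnat) (simp_all add: e)
  also have "\<dots> \<approx> Comp (Comp (Id 1) (Tens (Id 1) e)) E"
    by (rule cl, rule cl, rule Br10)
  also have "\<dots> \<approx> Comp (Tens (Id 1) e) E"
    by (rule cl, rule idl) (simp add: e)
  finally show ?thesis .
qed

lemma tIdc: "tmty ty (Comp g g') \<noteq> None \<Longrightarrow> Tens (Id n) (Comp g g') \<approx> Comp (Tens (Id n) g) (Tens (Id n) g')"
proof -
  assume a: "tmty ty (Comp g g') \<noteq> None"
  have "Tens (Id n) (Comp g g') \<approx> Tens (Comp (Id n) (Id n)) (Comp g g')"
    by (rule tl, rule bs, rule idl) simp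
  also have "\<dots> \<approx> Comp (Tens (Id n) g) (Tens (Id n) g')"
    by (rule bs, rule ich) (use a in \<open>auto split: option.splits\<close>)
  finally show ?thesis .
qed

lemma cIdt: "tmty ty (Comp g g') \<noteq> None \<Longrightarrow> Tens (Comp g g') (Id n) \<approx> Comp (Tens g (Id n)) (Tens g' (Id n))"
proof -
  assume a: "tmty ty (Comp g g') \<noteq> None"
  have "Tens (Comp g g') (Id n) \<approx> Tens (Comp g g') (Comp (Id n) (Id n))"
    by (rule tr, rule bs, rule idl) simp
  also have "\<dots> \<approx> Comp (Tens g (Id n)) (Tens g' (Id n))"
    by (rule bs, rule ich) (use a in \<open>auto split: option.splits\<close>)
  finally show ?thesis .
qed

definition "YY = Comp (Br 2 1) (Tens (Br 1 1) (Id 1))"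

lemma coas_l:
  assumes E: "tmty ty E = Some (1, 2)"
  shows "Comp (Tens (Id 1) (Comp (Br 1 1) E)) (Comp (Br 1 1) E) \<approx> Comp YY (Comp (Tens E (Id 1)) E)"
proof -
  let ?A = "Tens (Id 1) (Br 1 1)" and ?B = "Tens (Br 1 1) (Id 1)"
  have "Comp (Tens (Id 1) (Comp (Br 1 1) E)) (Comp (Br 1 1) E) \<approx> Comp (Comp ?A (Tens (Id 1) E)) (Comp (Br 1 1) E)"
    by (rule cl, rule tIdc) (simp add: E)
  also have "\<dots> \<approx> Comp ?A (Comp (Tens (Id 1) E) (Comp (Br 1 1) E))" by (rule asc) (simp add: E)
  also have "\<dots> \<approx> Comp ?A (Comp (Comp (Tens (Id 1) E) (Br 1 1)) E)" by (rule cr, rule bs, rule asc) (simp add: E)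
  also have "\<dots> \<approx> Comp ?A (Comp (Comp (Br 2 1) (Tens E (Id 1))) E)"
    by (rule cr, rule cl, rule bs, rule brnat) (simp_all add: E)
  also have "\<dots> \<approx> Comp ?A (Comp (Br 2 1) (Comp (Tens E (Id 1)) E))" by (rule cr, rule asc) (simp add: E)
  also have "\<dots> \<approx> Comp (Comp ?A (Br 2 1)) (Comp (Tens E (Id 1)) E)" by (rule bs, rule asc) (simp add: E)
  also have "\<dots> \<approx> Comp (Comp (Br 2 1) ?B) (Comp (Tens E (Id 1)) E)"
    by (rule cl, rule bs, rule brnat) simp_all
  finally show ?thesis unfolding YY_def .
qed

lemma coas_r:
  assumes E: "tmty ty E = Some (1, 2)"
  shows "Comp (Tens (Comp (Br 1 1) E) (Id 1)) (Comp (Br 1 1) E) \<approx> Comp YY (Comp (Tens (Id 1) E) E)"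
proof -
  let ?A = "Tens (Id 1) (Br 1 1)" and ?B = "Tens (Br 1 1) (Id 1)"
  have "Comp (Tens (Comp (Br 1 1) E) (Id 1)) (Comp (Br 1 1) E) \<approx> Comp (Comp ?B (Tens E (Id 1))) (Comp (Br 1 1) E)"
    by (rule cl, rule cIdt) (simp add: E)
  also have "\<dots> \<approx> Comp ?B (Comp (Tens E (Id 1)) (Comp (Br 1 1) E))" by (rule asc) (simp add: E)
  also have "\<dots> \<approx> Comp ?B (Comp (Comp (Tens E (Id 1)) (Br 1 1)) E)" by (rule cr, rule bs, rule asc) (simp add: E)
  also have "\<dots> \<approx> Comp ?B (Comp (Comp (Br 1 2) (Tens (Id 1) E)) E)"
    by (rule cr, rule cl, rule bs, rule brnat) (simp_all add: E)
  also have "\<dots> \<approx> Comp ?B (Comp (Br 1 2) (Comp (Tens (Id 1) E) E))" by (rule cr, rule asc) (simp add: E)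
  also have "\<dots> \<approx> Comp (Comp ?B (Br 1 2)) (Comp (Tens (Id 1) E) E)" by (rule bs, rule asc) (simp add: E)
  also have "\<dots> \<approx> Comp (Comp ?B (Comp ?A ?B)) (Comp (Tens (Id 1) E) E)"
    by (rule cl, rule cr) (use beq.hex2[of ty R 1 1 1] in \<open>simp add: numeral_2_eq_2\<close>)
  also have "\<dots> \<approx> Comp (Comp (Comp ?B ?A) ?B) (Comp (Tens (Id 1) E) E)"
    by (rule cl, rule bs, rule asc) simp
  also have "\<dots> \<approx> Comp (Comp (Br 2 1) ?B) (Comp (Tens (Id 1) E) E)"
    by (rule cl, rule cl, rule bs) (use beq.hex1[of ty R 1 1 1] in \<open>simp add: numeral_2_eq_2\<close>)
  finally show ?thesis unfolding YY_def .
qed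

lemma YY_cancel:
  assumes P: "tmty ty P = Some (a, 3)" and Q: "tmty ty Q = Some (a, 3)"
  and h: "Comp YY P \<approx> Comp YY Q"
  shows "P \<approx> Q"
proof -
  let ?B = "Tens (Br 1 1) (Id 1)" and ?Bi = "Tens (BrInv 1 1) (Id 1)"
  let ?Y' = "Comp ?Bi (BrInv 2 1)"
  have inv: "Comp ?Y' YY \<approx> Id 3"
  proof -
    have "Comp ?Y' YY \<approx> Comp ?Bi (Comp (BrInv 2 1) YY)" by (rule asc) (simp add: YY_def)
    also have "\<dots> \<approx> Comp ?Bi (Comp (Comp (BrInv 2 1) (Br 2 1)) ?B)" unfolding YY_def by (rule cr, rule bs, rule asc) simp
    also have "\<dots> \<approx> Comp ?Bi (Comp (Id 3) ?B)" by (rule cr, rule cl) (use beq.br_inv2[of ty R 2 1] in simp)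
    also have "\<dots> \<approx> Comp ?Bi ?B" by (rule cr, rule idl) simp
    also have "\<dots> \<approx> Tens (Comp (BrInv 1 1) (Br 1 1)) (Comp (Id 1) (Id 1))" by (rule ich) simp
    also have "\<dots> \<approx> Tens (Id 2) (Id 1)" by (rule beq.tens_cong, rule BrInvBr, rule idl) simp
    also have "\<dots> \<approx> Id 3" using beq.tens_id[of ty R 2 1] by simp
    finally show ?thesis .
  qed
  have "P \<approx> Comp (Id 3) P" by (rule bs, rule idl) (simp add: P)
  also have "\<dots> \<approx> Comp (Comp ?Y' YY) P" by (rule cl, rule bs, rule inv)
  also have "\<dots> \<approx> Comp ?Y' (Comp YY P)" by (rule asc) (simp add: P YY_def)
  also have "\<dots> \<approx> Comp ?Y' (Comp YY Q)" by (rule cr, rule h)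
  also have "\<dots> \<approx> Comp (Comp ?Y' YY) Q" by (rule bs, rule asc) (simp add: Q YY_def)
  also have "\<dots> \<approx> Comp (Id 3) Q" by (rule cl, rule inv)
  also have "\<dots> \<approx> Q" by (rule idl) (simp add: Q)
  finally show ?thesis .
qed

definition "coas E \<longleftrightarrow> Comp (Tens (Id 1) E) E \<approx> Comp (Tens E (Id 1)) E"
definition "cnt e E \<longleftrightarrow> Comp (Tens (Id 1) e) E \<approx> Id 1 \<and> Comp (Tens e (Id 1)) E \<approx> Id 1"

lemma coas_tau:
  assumes E: "tmty ty E = Some (1, 2)"
  shows "coas (Comp (Br 1 1) E) \<longleftrightarrow> coas E"
proof
  assume c: "coas (Comp (Br 1 1) E)"
  have h: "Comp YY (Comp (Tens (Id 1) E) E) \<approx> Comp YY (Comp (Tens E (Id 1)) E)"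
    using c coas_l[OF E] coas_r[OF E] unfolding coas_def by (meson bs beq.trans)
  show "coas E" unfolding coas_def by (rule YY_cancel[OF _ _ h]) (simp_all add: E)
next
  assume c: "coas E"
  show "coas (Comp (Br 1 1) E)"
    using cr[OF c[unfolded coas_def], of YY] coas_l[OF E] coas_r[OF E] unfolding coas_def by (meson bs beq.trans)
qed

lemma cnt_tau:
  assumes e: "tmty ty e = Some (1, 0)" and E: "tmty ty E = Some (1, 2)"
  shows "cnt e (Comp (Br 1 1) E) \<longleftrightarrow> cnt e E"
  unfolding cnt_def using cu1[OF e E] cu2[OF e E] by (meson bs beq.trans)

lemma coas_cong: "E \<approx> E' \<Longrightarrow> coas E \<Longrightarrow> coas E'"
  unfolding coas_def by (meson bs beq.trans tr tl cl cr)
lemma cnt_cong: "E \<approx> E' \<Longrightarrow> cnt e E \<Longrightarrow> cnt e E'"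
  unfolding cnt_def by (meson bs beq.trans cr)

lemma coas_bp:
  assumes E: "tmty ty E = Some (1, 2)" and c: "coas E"
  shows "coas (Comp (bp a) E)"
proof (induction a rule: int_induct[where k=0])
  case base
  show ?case by (rule coas_cong[OF _ c], simp add: bp_def, rule bs, rule idl) (simp add: E)
next
  case (step1 i)
  have "coas (Comp (Br 1 1) (Comp (bp i) E))" using step1.IH coas_tau[of "Comp (bp i) E"] E by simp
  moreover have "Comp (Br 1 1) (Comp (bp i) E) \<approx> Comp (bp (i+1)) E"
    by (rule beq.trans, rule bs, rule asc) (simp add: E, rule cl, rule bp_succ)
  ultimately show ?case by (rule coas_cong[rotated])
next
  case (step2 i)
  have "Comp (bp i) E \<approx> Comp (Comp (Br 1 1) (bp (i-1))) E"
    by (rule cl, rule bs) (use bp_succ[where a="i-1"] in simp)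
  also have "\<dots> \<approx> Comp (Br 1 1) (Comp (bp (i-1)) E)" by (rule asc) (simp add: E)
  finally have "Comp (bp i) E \<approx> Comp (Br 1 1) (Comp (bp (i-1)) E)" .
  then have "coas (Comp (Br 1 1) (Comp (bp (i-1)) E))" using step2.IH by (rule coas_cong)
  then show ?case using coas_tau[of "Comp (bp (i-1)) E"] E by simp
qed

lemma cnt_bp:
  assumes e: "tmty ty e = Some (1, 0)" and E: "tmty ty E = Some (1, 2)" and c: "cnt e E"
  shows "cnt e (Comp (bp a) E)"
proof (induction a rule: int_induct[where k=0])
  case base
  show ?case by (rule cnt_cong[OF _ c], simp add: bp_def, rule bs, rule idl) (simp add: E)
next
  case (step1 i)
  have "cnt e (Comp (Br 1 1) (Comp (bp i) E))" using step1.IH cnt_tau[OF e, of "Comp (bp i) E"] E by simp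
  moreover have "Comp (Br 1 1) (Comp (bp i) E) \<approx> Comp (bp (i+1)) E"
    by (rule beq.trans, rule bs, rule asc) (simp add: E, rule cl, rule bp_succ)
  ultimately show ?case by (rule cnt_cong[rotated])
next
  case (step2 i)
  have "Comp (bp i) E \<approx> Comp (Comp (Br 1 1) (bp (i-1))) E"
    by (rule cl, rule bs) (use bp_succ[where a="i-1"] in simp)
  also have "\<dots> \<approx> Comp (Br 1 1) (Comp (bp (i-1)) E)" by (rule asc) (simp add: E)
  finally have "Comp (bp i) E \<approx> Comp (Br 1 1) (Comp (bp (i-1)) E)" .
  then have "cnt e (Comp (Br 1 1) (Comp (bp (i-1)) E))" using step2.IH by (rule cnt_cong)
  then show ?case using cnt_tau[OF e, of "Comp (bp (i-1)) E"] E by simp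
qed

end

definition om :: "'g \<Rightarrow> 'g \<Rightarrow> int \<Rightarrow> 'g tm" where
  "om p m j = Comp (Gen (if even j then p else m)) (bp (- (j div 2)))"

fun pg :: "int list \<Rightarrow> genS \<Rightarrow> int list \<times> gen0 tm" where
  "pg k G_S = (map (\<lambda>x. x + 1) k, Id 1)"
| "pg k G_Sinv = (map (\<lambda>x. x - 1) k, Id 1)"
| "pg k (G0 G_Delta) = ([hd k, hd k], Comp (bp (hd k)) (Gen G_Delta))"
| "pg k (G0 G_Eps) = ([], Gen G_Eps)"
| "pg k (G0 G_ThP) = ([], Gen G_ThP)"
| "pg k (G0 G_ThM) = ([], Gen G_ThM)"
| "pg k (G0 G_OmP) = ([], om G_OmP G_OmM (k!0 + k!1))"
| "pg k (G0 G_OmM) = ([], om G_OmP G_OmM (k!0 + k!1 + 1))"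

fun pushS :: "int list \<Rightarrow> genS tm \<Rightarrow> int list \<times> gen0 tm" where
  "pushS k (Gen g) = pg k g"
| "pushS k (Id n) = (k, Id n)"
| "pushS k (Comp f g) = (let p = pushS k g; q = pushS (fst p) f in (fst q, Comp (snd q) (snd p)))"
| "pushS k (Tens f g) = (let p = pushS (take (src tyS f) k) f; q = pushS (drop (src tyS f) k) g
      in (fst p @ fst q, Tens (snd p) (snd q)))"
| "pushS k (Br m n) = (drop m k @ take m k, Br m n)"
| "pushS k (BrInv m n) = (drop n k @ take n k, BrInv m n)"

lemma tmty_om[simp]: "ty p = (2,0) \<Longrightarrow> ty m = (2,0) \<Longrightarrow> tmty ty (om p m j) = Some (2, 0)"
  by (simp add: om_def)

lemma pushS_ty:
  "tmty tyS t = Some (a, b) \<Longrightarrow> length k = a \<Longrightarrow>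
   length (fst (pushS k t)) = b \<and> tmty ty0 (snd (pushS k t)) = Some (a, b)"
proof (induction t arbitrary: a b k)
  case (Gen g)
  then show ?case
    by (cases g rule: tyS.cases; cases "case g of G0 h \<Rightarrow> h | _ \<Rightarrow> G_Eps") auto
next
  case (Id n) then show ?case by auto
next
  case (Comp f g)
  from Comp.prems(1) obtain c where g: "tmty tyS g = Some (a, c)" and f: "tmty tyS f = Some (c, b)"
    by (rule tmty_Comp_E)
  show ?case using Comp.IH(2)[OF g Comp.prems(2)] Comp.IH(1)[OF f] by (auto simp: Let_def)
next
  case (Tens f g)
  from Tens.prems(1) obtain a1 b1 a2 b2 where f: "tmty tyS f = Some (a1, b1)" and g: "tmty tyS g = Some (a2, b2)"
    and ab: "a = a1 + a2" "b = b1 + b2" by (rule tmty_Tens_E)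
  have s: "src tyS f = a1" by (rule tmty_src[OF f])
  show ?case using Tens.IH(1)[OF f, of "take a1 k"] Tens.IH(2)[OF g, of "drop a1 k"] Tens.prems(2) ab s
    by (auto simp: Let_def)
next
  case (Br m n) then show ?case by auto
next
  case (BrInv m n) then show ?case by auto
qed


lemma RD_ty: "\<forall>(x, y)\<in>R_D. tmty ty0 x = tmty ty0 y" by (auto simp: R_D_def coalg_rels_def)
lemma RDS_ty: "\<forall>(x, y)\<in>R_DS. tmty tyS x = tmty tyS y" by (auto simp: R_DS_def coalg_rels_def)


context fixes ty :: "'g \<Rightarrow> nat \<times> nat" and R :: "('g tm \<times> 'g tm) set"
begin
abbreviation eqv5 (infix "\<approx>" 50) where "s \<approx> t \<equiv> beq ty R s t"

lemma om_Tid: assumes "tmty ty X = Some (2, 0)" shows "Comp X (Tens (Id 1) (Id 1)) \<approx> X"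
proof -
  have "Comp X (Tens (Id 1) (Id 1)) \<approx> Comp X (Id 2)" by (rule cr, rule Tid11)
  also have "\<dots> \<approx> X" by (rule idr) (simp add: assms)
  finally show ?thesis .
qed

lemma om_shift:
  assumes "ty p = (2, 0)" "ty m = (2, 0)"
  shows "Comp (om p m (j + 2)) (Br 1 1) \<approx> om p m j"
proof -
  let ?b = "Gen (if even j then p else m)"
  have "(j + 2) div 2 = j div 2 + 1" by presburger
  then have e1: "om p m (j+2) = Comp ?b (bp (- (j div 2) - 1))" by (simp add: om_def)
  have "Comp (om p m (j+2)) (Br 1 1) \<approx> Comp ?b (Comp (bp (- (j div 2) - 1)) (Br 1 1))"
    unfolding e1 by (rule asc) (simp add: assms)
  also have "\<dots> \<approx> Comp ?b (Comp (bp (- (j div 2) - 1)) (bp 1))" by (rule cr, rule cr, rule bs, rule bp1)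
  also have "\<dots> \<approx> Comp ?b (bp (- (j div 2) - 1 + 1))" by (rule cr, rule bp_add)
  finally show ?thesis by (simp add: om_def)
qed

lemma om_cong: "j = j' \<Longrightarrow> om p m j \<approx> om p m j'" by (simp add: beq.refl)

end

abbreviation eqD (infix "\<approx>\<^sub>D" 50) where "s \<approx>\<^sub>D t \<equiv> beq ty0 R_D s t"
abbreviation eqS (infix "\<approx>\<^sub>S" 50) where "s \<approx>\<^sub>S t \<equiv> beq tyS R_DS s t"

lemma D_coas: "coas ty0 R_D (Gen G_Delta)"
  unfolding coas_def by (rule beq.rel) (simp add: R_D_def coalg_rels_def)
lemma D_cnt: "cnt ty0 R_D (Gen G_Eps) (Gen G_Delta)"
  unfolding cnt_def by (auto intro!: beq.rel simp: R_D_def coalg_rels_def)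

abbreviation "TD x \<equiv> Comp (bp x) (Gen G_Delta)"

lemma r1: "fst (pushS [x] (Comp (Gen G_S) (Gen G_Sinv))) = fst (pushS [x] (Id 1)) \<and>
   snd (pushS [x] (Comp (Gen G_S) (Gen G_Sinv))) \<approx>\<^sub>D snd (pushS [x] (Id 1))"
  by (simp, rule idl) simp
lemma r2: "fst (pushS [x] (Comp (Gen G_Sinv) (Gen G_S))) = fst (pushS [x] (Id 1)) \<and>
   snd (pushS [x] (Comp (Gen G_Sinv) (Gen G_S))) \<approx>\<^sub>D snd (pushS [x] (Id 1))"
  by (simp, rule idl) simp
lemma r3: "fst (pushS [x] (Comp (Gen (G0 G_Delta)) (Gen G_S))) =
      fst (pushS [x] (Comp (Tens (Gen G_S) (Gen G_S)) (Comp (Br 1 1) (Gen (G0 G_Delta))))) \<and>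
   snd (pushS [x] (Comp (Gen (G0 G_Delta)) (Gen G_S))) \<approx>\<^sub>D
      snd (pushS [x] (Comp (Tens (Gen G_S) (Gen G_S)) (Comp (Br 1 1) (Gen (G0 G_Delta)))))"
proof -
  have "Comp (TD (x+1)) (Id 1) \<approx>\<^sub>D TD (x+1)" by (rule idr) simp
  also have "\<dots> \<approx>\<^sub>D Comp (Comp (Br 1 1) (bp x)) (Gen G_Delta)" by (rule cl, rule bs, rule bp_succ)
  also have "\<dots> \<approx>\<^sub>D Comp (Br 1 1) (TD x)" by (rule asc) simp
  also have "\<dots> \<approx>\<^sub>D Comp (Id 2) (Comp (Br 1 1) (TD x))" by (rule bs, rule idl) simp
  also have "\<dots> \<approx>\<^sub>D Comp (Tens (Id 1) (Id 1)) (Comp (Br 1 1) (TD x))" by (rule cl, rule bs, rule Tid11)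
  finally show ?thesis by (simp add: Let_def)
qed

lemma r4: "fst (pushS [x] (Comp (Gen (G0 g)) (Gen G_S))) = fst (pushS [x] (Gen (G0 g))) \<and>
   snd (pushS [x] (Comp (Gen (G0 g)) (Gen G_S))) \<approx>\<^sub>D snd (pushS [x] (Gen (G0 g)))"
  if "g \<in> {G_Eps, G_ThP, G_ThM}"
  using that by (auto intro!: idr)

lemma r7: "fst (pushS [x, y] (Comp (Gen (G0 G_OmP)) (Tens (Gen G_S) (Id 1)))) = fst (pushS [x, y] (Gen (G0 G_OmM))) \<and>
   snd (pushS [x, y] (Comp (Gen (G0 G_OmP)) (Tens (Gen G_S) (Id 1)))) \<approx>\<^sub>D snd (pushS [x, y] (Gen (G0 G_OmM)))"
proof -
  have "Comp (om G_OmP G_OmM (x + 1 + y)) (Tens (Id 1) (Id 1)) \<approx>\<^sub>D om G_OmP G_OmM (x + 1 + y)"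
    by (rule om_Tid) simp
  also have "\<dots> \<approx>\<^sub>D om G_OmP G_OmM (x + y + 1)" by (rule om_cong) simp
  finally show ?thesis by (simp add: Let_def)
qed

lemma r8: "fst (pushS [x, y] (Comp (Gen (G0 G_OmP)) (Tens (Id 1) (Gen G_S)))) = fst (pushS [x, y] (Gen (G0 G_OmM))) \<and>
   snd (pushS [x, y] (Comp (Gen (G0 G_OmP)) (Tens (Id 1) (Gen G_S)))) \<approx>\<^sub>D snd (pushS [x, y] (Gen (G0 G_OmM)))"
proof -
  have "Comp (om G_OmP G_OmM (x + (y + 1))) (Tens (Id 1) (Id 1)) \<approx>\<^sub>D om G_OmP G_OmM (x + (y + 1))"
    by (rule om_Tid) simp
  also have "\<dots> \<approx>\<^sub>D om G_OmP G_OmM (x + y + 1)" by (rule om_cong) simp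
  finally show ?thesis by (simp add: Let_def)
qed

lemma r9: "fst (pushS [x, y] (Comp (Gen (G0 G_OmP)) (Tens (Gen G_Sinv) (Id 1)))) =
     fst (pushS [x, y] (Comp (Gen (G0 G_OmM)) (Br 1 1))) \<and>
   snd (pushS [x, y] (Comp (Gen (G0 G_OmP)) (Tens (Gen G_Sinv) (Id 1)))) \<approx>\<^sub>D
     snd (pushS [x, y] (Comp (Gen (G0 G_OmM)) (Br 1 1)))"
proof -
  have "Comp (om G_OmP G_OmM (x - 1 + y)) (Tens (Id 1) (Id 1)) \<approx>\<^sub>D om G_OmP G_OmM (x - 1 + y)"
    by (rule om_Tid) simp
  also have "\<dots> \<approx>\<^sub>D Comp (om G_OmP G_OmM (x - 1 + y + 2)) (Br 1 1)" by (rule bs, rule om_shift) simp_all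
  also have "\<dots> \<approx>\<^sub>D Comp (om G_OmP G_OmM (y + x + 1)) (Br 1 1)" by (rule cl, rule om_cong) simp
  finally show ?thesis by (simp add: Let_def)
qed

lemma r10: "fst (pushS [x, y] (Comp (Gen (G0 G_OmP)) (Tens (Id 1) (Gen G_Sinv)))) =
     fst (pushS [x, y] (Comp (Gen (G0 G_OmM)) (Br 1 1))) \<and>
   snd (pushS [x, y] (Comp (Gen (G0 G_OmP)) (Tens (Id 1) (Gen G_Sinv)))) \<approx>\<^sub>D
     snd (pushS [x, y] (Comp (Gen (G0 G_OmM)) (Br 1 1)))"
proof -
  have "Comp (om G_OmP G_OmM (x + (y - 1))) (Tens (Id 1) (Id 1)) \<approx>\<^sub>D om G_OmP G_OmM (x + (y - 1))"
    by (rule om_Tid) simp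
  also have "\<dots> \<approx>\<^sub>D Comp (om G_OmP G_OmM (x + (y - 1) + 2)) (Br 1 1)" by (rule bs, rule om_shift) simp_all
  also have "\<dots> \<approx>\<^sub>D Comp (om G_OmP G_OmM (y + x + 1)) (Br 1 1)" by (rule cl, rule om_cong) simp
  finally show ?thesis by (simp add: Let_def)
qed

lemma r11: "fst (pushS [x] (Comp (Tens (Id 1) (Gen (G0 G_Delta))) (Gen (G0 G_Delta)))) =
     fst (pushS [x] (Comp (Tens (Gen (G0 G_Delta)) (Id 1)) (Gen (G0 G_Delta)))) \<and>
   snd (pushS [x] (Comp (Tens (Id 1) (Gen (G0 G_Delta))) (Gen (G0 G_Delta)))) \<approx>\<^sub>D
     snd (pushS [x] (Comp (Tens (Gen (G0 G_Delta)) (Id 1)) (Gen (G0 G_Delta))))"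
  using coas_bp[OF _ D_coas, of x] by (simp add: Let_def coas_def)

lemma r12: "fst (pushS [x] (Comp (Tens (Id 1) (Gen (G0 G_Eps))) (Gen (G0 G_Delta)))) = fst (pushS [x] (Id 1)) \<and>
   snd (pushS [x] (Comp (Tens (Id 1) (Gen (G0 G_Eps))) (Gen (G0 G_Delta)))) \<approx>\<^sub>D snd (pushS [x] (Id 1))"
  using cnt_bp[OF _ _ D_cnt, of x] by (simp add: Let_def cnt_def)
lemma r13: "fst (pushS [x] (Comp (Tens (Gen (G0 G_Eps)) (Id 1)) (Gen (G0 G_Delta)))) = fst (pushS [x] (Id 1)) \<and>
   snd (pushS [x] (Comp (Tens (Gen (G0 G_Eps)) (Id 1)) (Gen (G0 G_Delta)))) \<approx>\<^sub>D snd (pushS [x] (Id 1))"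
  using cnt_bp[OF _ _ D_cnt, of x] by (simp add: Let_def cnt_def)

lemma rel_case:
  assumes "(s, t) \<in> R_DS" "tmty tyS s = Some (a, b)" "length k = a"
  shows "fst (pushS k s) = fst (pushS k t) \<and> beq ty0 R_D (snd (pushS k s)) (snd (pushS k t))"
proof -
  have k1: "\<exists>x. k = [x]" if "a = 1" using assms(3) that by (cases k; cases "tl k") auto
  have k2: "\<exists>x y. k = [x, y]" if "a = 2" using assms(3) that
    by (cases k; cases "tl k"; cases "tl (tl k)") (auto simp: numeral_2_eq_2)
  show ?thesis using assms(1,2) unfolding R_DS_def coalg_rels_def
    apply (elim UnE insertE emptyE; simp only: prod.inject; elim conjE; hypsubst)
    subgoal using k1 r11 by force
    subgoal using k1 r12 by force
    subgoal using k1 r13 by force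
    subgoal using k1 r1 by force
    subgoal using k1 r2 by force
    subgoal using k1 r3 by force
    subgoal using k1 r4 by force
    subgoal using k1 r4 by force
    subgoal using k1 r4 by force
    subgoal using k2 r7 by force
    subgoal using k2 r8 by force
    subgoal using k2 r9 by force
    subgoal using k2 r10 by force
    done
qed

lemma tyS_ty_eq: "beq tyS R_DS s t \<Longrightarrow> tmty tyS s = tmty tyS t"
  by (rule beq_tmty[OF _ RDS_ty])

lemma pushS_resp:
  assumes "s \<approx>\<^sub>S t"
  shows "tmty tyS s = Some (a, b) \<Longrightarrow> length v = a \<Longrightarrow>
     fst (pushS v s) = fst (pushS v t) \<and> snd (pushS v s) \<approx>\<^sub>D snd (pushS v t)"
  using assms
proof (induction arbitrary: a b v rule: beq.induct)
  case (refl t)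
  then show ?case by (simp add: beq.refl)
next
  case (sym s t)
  have "tmty tyS s = Some (a, b)" using sym.prems(1) tyS_ty_eq[OF sym.hyps(1)] by simp
  from sym.IH[OF this sym.prems(2)] show ?case by (simp add: bs)
next
  case (trans s t u)
  have "tmty tyS t = Some (a, b)" using trans.prems(1) tyS_ty_eq[OF trans.hyps(1)] by simp
  from trans.IH(1)[OF trans.prems] trans.IH(2)[OF this trans.prems(2)] show ?case
    by (auto intro: beq.trans)
next
  case (comp_cong s s' t t')
  from comp_cong.prems(1) obtain c where t: "tmty tyS t = Some (a, c)" and s: "tmty tyS s = Some (c, b)"
    by (rule tmty_Comp_E)
  note I1 = comp_cong.IH(2)[OF t comp_cong.prems(2)]
  have l: "length (fst (pushS v t)) = c" using pushS_ty[OF t comp_cong.prems(2)] by simp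
  note I2 = comp_cong.IH(1)[OF s l]
  show ?case using I1 I2 by (auto simp: Let_def intro: beq.comp_cong)
next
  case (tens_cong s s' t t')
  from tens_cong.prems(1) obtain a1 b1 a2 b2 where s: "tmty tyS s = Some (a1, b1)" and t: "tmty tyS t = Some (a2, b2)"
    and ab: "a = a1 + a2" "b = b1 + b2" by (rule tmty_Tens_E)
  have s': "tmty tyS s' = Some (a1, b1)" using s tyS_ty_eq[OF tens_cong.hyps(1)] by simp
  have e: "src tyS s = a1" "src tyS s' = a1" using tmty_src[OF s] tmty_src[OF s'] by auto
  note I1 = tens_cong.IH(1)[OF s, of "take a1 v"]
  note I2 = tens_cong.IH(2)[OF t, of "drop a1 v"]
  show ?case using I1 I2 tens_cong.prems(2) ab e by (auto simp: Let_def intro: beq.tens_cong)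
next
  case (rel s t)
  then show ?case by (rule rel_case)
next
  case (id_l f n m)
  then show ?case using pushS_ty[of f n m v] by (auto simp: Let_def intro: beq.id_l)
next
  case (id_r f n m)
  then show ?case using pushS_ty[of f n m v] by (auto simp: Let_def intro: beq.id_r)
next
  case (assoc f c d g b' h a')
  have aa: "a = a'" "b = d" using assoc.prems(1) assoc.hyps by auto
  define ph where "ph = pushS v h"
  define pg where "pg = pushS (fst ph) g"
  define pf where "pf = pushS (fst pg) f"
  have th: "length (fst ph) = b'" "tmty ty0 (snd ph) = Some (a', b')"
    using pushS_ty[OF assoc.hyps(3)] assoc.prems(2) aa unfolding ph_def by auto
  have tg: "length (fst pg) = c" "tmty ty0 (snd pg) = Some (b', c)"
    using pushS_ty[OF assoc.hyps(2) th(1)] unfolding pg_def by auto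
  have tf: "tmty ty0 (snd pf) = Some (c, d)"
    using pushS_ty[OF assoc.hyps(1) tg(1)] unfolding pf_def by auto
  show ?case using th tg tf
    by (simp add: Let_def ph_def[symmetric] pg_def[symmetric] pf_def[symmetric], intro beq.assoc)

next
  case (tens_assoc f g h)
  from tens_assoc.prems(1) obtain af bf ag bg ah bh where
    f: "tmty tyS f = Some (af, bf)" and g: "tmty tyS g = Some (ag, bg)" and h: "tmty tyS h = Some (ah, bh)"
    and ab: "a = af + ag + ah"
    by (auto split: option.splits prod.splits)
  have e: "src tyS f = af" "src tyS g = ag" using tmty_src[OF f] tmty_src[OF g] by auto
  have l1: "take af (take (af + ag) v) = take af v" by (simp add: min_def)
  have l2: "drop af (take (af + ag) v) = take ag (drop af v)" by (simp add: drop_take)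
  have l3: "drop (af + ag) v = drop ag (drop af v)" by (simp add: add.commute)
  show ?case using e l1 l2 l3 by (simp add: Let_def beq.tens_assoc)

next
  case (tens_unit_l f)
  show ?case by (simp add: Let_def beq.tens_unit_l)

next
  case (tens_unit_r f)
  from tens_unit_r.prems(1) have f: "tmty tyS f = Some (a, b)" by (auto split: option.splits prod.splits)
  have e: "src tyS f = a" using tmty_src[OF f] by auto
  show ?case using e tens_unit_r.prems(2) by (simp add: Let_def beq.tens_unit_r)

next
  case (tens_id m n)
  have "m + n = a" using tens_id.prems by simp
  then show ?case using beq.tens_id[of ty0 R_D m n] by (simp add: Let_def)

next
  case (interchange f b' c f' a' g e k g' d)
  have aa: "a = a' + d" using interchange.prems(1) interchange.hyps by auto
  have e1: "src tyS f' = a'" "src tyS f = b'" "src tyS (Comp f f') = a'"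
    using tmty_src[OF interchange.hyps(1)] tmty_src[OF interchange.hyps(2)] by auto
  define p1 where "p1 = pushS (take a' v) f'"
  define p2 where "p2 = pushS (drop a' v) g'"
  define q1 where "q1 = pushS (fst p1) f"
  define q2 where "q2 = pushS (fst p2) g"
  have t1: "length (fst p1) = b'" "tmty ty0 (snd p1) = Some (a', b')"
    using pushS_ty[OF interchange.hyps(2)] interchange.prems(2) aa unfolding p1_def by auto
  have t2: "length (fst p2) = e" "tmty ty0 (snd p2) = Some (d, e)"
    using pushS_ty[OF interchange.hyps(4)] interchange.prems(2) aa unfolding p2_def by auto
  have t3: "tmty ty0 (snd q1) = Some (b', c)"
    using pushS_ty[OF interchange.hyps(1) t1(1)] unfolding q1_def by auto
  have t4: "tmty ty0 (snd q2) = Some (e, k)"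
    using pushS_ty[OF interchange.hyps(3) t2(1)] unfolding q2_def by auto
  show ?case using e1 t1 t2 t3 t4
    by (simp add: Let_def p1_def[symmetric] p2_def[symmetric] q1_def[symmetric] q2_def[symmetric],
        intro beq.interchange)

next
  case (br_inv1 m n)
  have l: "length v = n + m" using br_inv1.prems by auto
  then show ?case by (simp add: beq.br_inv1)

next
  case (br_inv2 m n)
  have l: "length v = m + n" using br_inv2.prems by auto
  then show ?case by (simp add: beq.br_inv2)

next
  case (br_nat f m m' g n n')
  have l: "length v = m + n" using br_nat.prems br_nat.hyps by auto
  have e: "src tyS f = m" "src tyS g = n" using tmty_src[OF br_nat.hyps(1)] tmty_src[OF br_nat.hyps(2)] by auto
  define p1 where "p1 = pushS (take m v) f"
  define p2 where "p2 = pushS (drop m v) g"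
  have t1: "length (fst p1) = m'" "tmty ty0 (snd p1) = Some (m, m')"
    using pushS_ty[OF br_nat.hyps(1)] l unfolding p1_def by auto
  have t2: "length (fst p2) = n'" "tmty ty0 (snd p2) = Some (n, n')"
    using pushS_ty[OF br_nat.hyps(2)] l unfolding p2_def by auto
  have d: "take n (drop m v @ take m v) = drop m v" "drop n (drop m v @ take m v) = take m v"
    using l by auto
  show ?case using e t1 t2 d
    by (simp add: Let_def p1_def[symmetric] p2_def[symmetric], intro beq.br_nat)

next
  case (hex1 l m n)
  have len: "length v = l + m + n" using hex1.prems by auto
  obtain x y z where v: "v = x @ y @ z" "length x = l" "length y = m" "length z = n"
  proof -
    have d: "drop (l + m) v = drop m (drop l v)" by (simp add: add.commute)
    show ?thesis
    proof (rule that[of "take l v" "take m (drop l v)" "drop (l+m) v"])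
      show "v = take l v @ take m (drop l v) @ drop (l + m) v" by (simp only: d append_take_drop_id)
    qed (use len in auto)
  qed
  show ?case using v by (simp add: Let_def beq.hex1)

next
  case (hex2 l m n)
  have len: "length v = l + m + n" using hex2.prems by auto
  obtain x y z where v: "v = x @ y @ z" "length x = l" "length y = m" "length z = n"
  proof -
    have d: "drop (l + m) v = drop m (drop l v)" by (simp add: add.commute)
    show ?thesis
    proof (rule that[of "take l v" "take m (drop l v)" "drop (l+m) v"])
      show "v = take l v @ take m (drop l v) @ drop (l + m) v" by (simp only: d append_take_drop_id)
    qed (use len in auto)
  qed
  show ?case using v by (simp add: Let_def beq.hex2)

qed

abbreviation "SS \<equiv> Gen G_S"
abbreviation "Si \<equiv> Gen G_Sinv"
abbreviation "DD \<equiv> Gen (G0 G_Delta)"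
definition Spow :: "int \<Rightarrow> genS tm" where "Spow = pw SS Si 1"

lemma rS: "(s, t) \<in> R_DS \<Longrightarrow> s \<approx>\<^sub>S t" by (rule beq.rel)

lemma SSi: "Comp SS Si \<approx>\<^sub>S Id 1" by (rule rS) (simp add: R_DS_def)
lemma SiS: "Comp Si SS \<approx>\<^sub>S Id 1" by (rule rS) (simp add: R_DS_def)

lemma tmty_Spow[simp]: "tmty tyS (Spow a) = Some (1, 1)"
  unfolding Spow_def by (rule tmty_pw[OF _ _ SSi SiS]) simp_all
lemma Spow_S: "Comp SS (Spow a) \<approx>\<^sub>S Spow (a + 1)"
  unfolding Spow_def by (rule pw_P[OF _ _ SSi SiS]) simp_all
lemma Spow_Si: "Comp Si (Spow a) \<approx>\<^sub>S Spow (a - 1)"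
  unfolding Spow_def by (rule pw_Q[OF _ _ SSi SiS]) simp_all
lemma Spow0[simp]: "Spow 0 = Id 1" by (simp add: Spow_def)

fun svec :: "int list \<Rightarrow> genS tm" where
  "svec [] = Id 0" | "svec (x # xs) = Tens (Spow x) (svec xs)"

lemma tmty_svec[simp]: "tmty tyS (svec k) = Some (length k, length k)"
  by (induction k) auto

lemma svec_app: "svec (xs @ ys) \<approx>\<^sub>S Tens (svec xs) (svec ys)"
proof (induction xs)
  case Nil
  then show ?case by (simp, rule bs, rule beq.tens_unit_l)
next
  case (Cons x xs)
  have "svec ((x # xs) @ ys) \<approx>\<^sub>S Tens (Spow x) (Tens (svec xs) (svec ys))" by (simp, rule tr, rule Cons.IH)
  also have "\<dots> \<approx>\<^sub>S Tens (svec (x # xs)) (svec ys)" by (simp, rule bs, rule beq.tens_assoc)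
  finally show ?case .
qed

lemma svec1: "svec [x] \<approx>\<^sub>S Spow x" by (simp, rule beq.tens_unit_r)
lemma svec2: "svec [x, y] \<approx>\<^sub>S Tens (Spow x) (Spow y)" by (simp, rule tr, rule beq.tens_unit_r)

lemma tmty_map: "tmty tyS (map_tm G0 s) = tmty ty0 s"
  by (induction s) (auto split: option.splits prod.splits)

lemma src_map: "src tyS (map_tm G0 s) = src ty0 s"
  by (induction s) auto

lemma eps_Spow:
  assumes e: "tyS g = (1, 0)" and r: "Comp (Gen g) SS \<approx>\<^sub>S Gen g"
  shows "Comp (Gen g) (Spow a) \<approx>\<^sub>S Gen g"
proof (induction a rule: int_induct[where k=0])
  case base
  then show ?case by (simp, rule idr) (simp add: e)
next
  case (step1 i)
  have "Comp (Gen g) (Spow (i+1)) \<approx>\<^sub>S Comp (Gen g) (Comp SS (Spow i))" by (rule cr, rule bs, rule Spow_S)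
  also have "\<dots> \<approx>\<^sub>S Comp (Comp (Gen g) SS) (Spow i)" by (rule bs, rule asc) (simp add: e)
  also have "\<dots> \<approx>\<^sub>S Comp (Gen g) (Spow i)" by (rule cl, rule r)
  finally show ?case using step1.IH by (rule beq.trans)
next
  case (step2 i)
  have rr: "Comp (Gen g) Si \<approx>\<^sub>S Gen g"
  proof -
    have "Comp (Gen g) Si \<approx>\<^sub>S Comp (Comp (Gen g) SS) Si" by (rule cl, rule bs, rule r)
    also have "\<dots> \<approx>\<^sub>S Comp (Gen g) (Comp SS Si)" by (rule asc) (simp add: e)
    also have "\<dots> \<approx>\<^sub>S Comp (Gen g) (Id 1)" by (rule cr, rule SSi)
    also have "\<dots> \<approx>\<^sub>S Gen g" by (rule idr) (simp add: e)
    finally show ?thesis .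
  qed
  have "Comp (Gen g) (Spow (i-1)) \<approx>\<^sub>S Comp (Gen g) (Comp Si (Spow i))" by (rule cr, rule bs, rule Spow_Si)
  also have "\<dots> \<approx>\<^sub>S Comp (Comp (Gen g) Si) (Spow i)" by (rule bs, rule asc) (simp add: e)
  also have "\<dots> \<approx>\<^sub>S Comp (Gen g) (Spow i)" by (rule cl, rule rr)
  finally show ?case using step2.IH by (rule beq.trans)
qed

lemma D_step:
  assumes tX: "tmty tyS X = Some (1, 1)" and tB: "tmty tyS B = Some (2, 2)"
  and hX: "Comp DD X \<approx>\<^sub>S Comp (Tens X X) (Comp B DD)"
  and hS: "Comp X (Spow a) \<approx>\<^sub>S Spow a'" and hB: "Comp B (bp a) \<approx>\<^sub>S bp a'"
  and hN: "Comp B (Tens (Spow a) (Spow a)) \<approx>\<^sub>S Comp (Tens (Spow a) (Spow a)) B"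
  and IH: "Comp DD (Spow a) \<approx>\<^sub>S Comp (Tens (Spow a) (Spow a)) (Comp (bp a) DD)"
  shows "Comp DD (Spow a') \<approx>\<^sub>S Comp (Tens (Spow a') (Spow a')) (Comp (bp a') DD)"
proof -
  let ?Sa = "Spow a"
  have "Comp DD (Spow a') \<approx>\<^sub>S Comp DD (Comp X ?Sa)" by (rule cr, rule bs, rule hS)
  also have "\<dots> \<approx>\<^sub>S Comp (Comp DD X) ?Sa" by (rule bs, rule asc) (simp add: tX)
  also have "\<dots> \<approx>\<^sub>S Comp (Comp (Tens X X) (Comp B DD)) ?Sa" by (rule cl, rule hX)
  also have "\<dots> \<approx>\<^sub>S Comp (Tens X X) (Comp (Comp B DD) ?Sa)" by (rule asc) (simp add: tX tB)
  also have "\<dots> \<approx>\<^sub>S Comp (Tens X X) (Comp B (Comp DD ?Sa))" by (rule cr, rule asc) (simp add: tB)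
  also have "\<dots> \<approx>\<^sub>S Comp (Tens X X) (Comp B (Comp (Tens ?Sa ?Sa) (Comp (bp a) DD)))" by (rule cr, rule cr, rule IH)
  also have "\<dots> \<approx>\<^sub>S Comp (Tens X X) (Comp (Comp B (Tens ?Sa ?Sa)) (Comp (bp a) DD))" by (rule cr, rule bs, rule asc) (simp add: tB)
  also have "\<dots> \<approx>\<^sub>S Comp (Tens X X) (Comp (Comp (Tens ?Sa ?Sa) B) (Comp (bp a) DD))" by (rule cr, rule cl, rule hN)
  also have "\<dots> \<approx>\<^sub>S Comp (Tens X X) (Comp (Tens ?Sa ?Sa) (Comp B (Comp (bp a) DD)))" by (rule cr, rule asc) (simp add: tB)
  also have "\<dots> \<approx>\<^sub>S Comp (Comp (Tens X X) (Tens ?Sa ?Sa)) (Comp B (Comp (bp a) DD))" by (rule bs, rule asc) (simp add: tB tX)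
  also have "\<dots> \<approx>\<^sub>S Comp (Tens (Comp X ?Sa) (Comp X ?Sa)) (Comp B (Comp (bp a) DD))" by (rule cl, rule ich) (simp add: tX)
  also have "\<dots> \<approx>\<^sub>S Comp (Tens (Spow a') (Spow a')) (Comp B (Comp (bp a) DD))" by (rule cl, rule beq.tens_cong, rule hS, rule hS)
  also have "\<dots> \<approx>\<^sub>S Comp (Tens (Spow a') (Spow a')) (Comp (Comp B (bp a)) DD)" by (rule cr, rule bs, rule asc) (simp add: tB)
  also have "\<dots> \<approx>\<^sub>S Comp (Tens (Spow a') (Spow a')) (Comp (bp a') DD)" by (rule cr, rule cl, rule hB)
  finally show ?thesis .
qed

lemma DS: "Comp DD SS \<approx>\<^sub>S Comp (Tens SS SS) (Comp (Br 1 1) DD)" by (rule rS) (simp add: R_DS_def)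

lemma DSi: "Comp DD Si \<approx>\<^sub>S Comp (Tens Si Si) (Comp (BrInv 1 1) DD)"
proof -
  have a: "Comp DD SS \<approx>\<^sub>S Comp (Br 1 1) (Comp (Tens SS SS) DD)"
  proof -
    have "Comp DD SS \<approx>\<^sub>S Comp (Tens SS SS) (Comp (Br 1 1) DD)" by (rule DS)
    also have "\<dots> \<approx>\<^sub>S Comp (Comp (Tens SS SS) (Br 1 1)) DD" by (rule bs, rule asc) simp
    also have "\<dots> \<approx>\<^sub>S Comp (Comp (Br 1 1) (Tens SS SS)) DD" by (rule cl, rule bs, rule brnat) simp_all
    also have "\<dots> \<approx>\<^sub>S Comp (Br 1 1) (Comp (Tens SS SS) DD)" by (rule asc) simp
    finally show ?thesis .
  qed
  have b: "Comp (BrInv 1 1) (Comp DD SS) \<approx>\<^sub>S Comp (Tens SS SS) DD"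
  proof -
    have "Comp (BrInv 1 1) (Comp DD SS) \<approx>\<^sub>S Comp (BrInv 1 1) (Comp (Br 1 1) (Comp (Tens SS SS) DD))" by (rule cr, rule a)
    also have "\<dots> \<approx>\<^sub>S Comp (Comp (BrInv 1 1) (Br 1 1)) (Comp (Tens SS SS) DD)" by (rule bs, rule asc) simp
    also have "\<dots> \<approx>\<^sub>S Comp (Id 2) (Comp (Tens SS SS) DD)" by (rule cl, rule BrInvBr)
    also have "\<dots> \<approx>\<^sub>S Comp (Tens SS SS) DD" by (rule idl) simp
    finally show ?thesis .
  qed
  have c: "Comp (BrInv 1 1) DD \<approx>\<^sub>S Comp (Tens SS SS) (Comp DD Si)"
  proof -
    have "Comp (BrInv 1 1) DD \<approx>\<^sub>S Comp (BrInv 1 1) (Comp DD (Id 1))" by (rule cr, rule bs, rule idr) simp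
    also have "\<dots> \<approx>\<^sub>S Comp (BrInv 1 1) (Comp DD (Comp SS Si))" by (rule cr, rule cr, rule bs, rule SSi)
    also have "\<dots> \<approx>\<^sub>S Comp (BrInv 1 1) (Comp (Comp DD SS) Si)" by (rule cr, rule bs, rule asc) simp
    also have "\<dots> \<approx>\<^sub>S Comp (Comp (BrInv 1 1) (Comp DD SS)) Si" by (rule bs, rule asc) simp
    also have "\<dots> \<approx>\<^sub>S Comp (Comp (Tens SS SS) DD) Si" by (rule cl, rule b)
    also have "\<dots> \<approx>\<^sub>S Comp (Tens SS SS) (Comp DD Si)" by (rule asc) simp
    finally show ?thesis .
  qed
  have "Comp (Tens Si Si) (Comp (BrInv 1 1) DD) \<approx>\<^sub>S Comp (Tens Si Si) (Comp (Tens SS SS) (Comp DD Si))" by (rule cr, rule c)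
  also have "\<dots> \<approx>\<^sub>S Comp (Comp (Tens Si Si) (Tens SS SS)) (Comp DD Si)" by (rule bs, rule asc) simp
  also have "\<dots> \<approx>\<^sub>S Comp (Tens (Comp Si SS) (Comp Si SS)) (Comp DD Si)" by (rule cl, rule ich) simp
  also have "\<dots> \<approx>\<^sub>S Comp (Tens (Id 1) (Id 1)) (Comp DD Si)" by (rule cl, rule beq.tens_cong, rule SiS, rule SiS)
  also have "\<dots> \<approx>\<^sub>S Comp (Id 2) (Comp DD Si)" by (rule cl, rule Tid11)
  also have "\<dots> \<approx>\<^sub>S Comp DD Si" by (rule idl) simp
  finally show ?thesis by (rule bs)
qed

lemma D_Spow: "Comp DD (Spow a) \<approx>\<^sub>S Comp (Tens (Spow a) (Spow a)) (Comp (bp a) DD)"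
proof (induction a rule: int_induct[where k=0])
  case base
  have "Comp DD (Spow 0) \<approx>\<^sub>S DD" by (simp, rule idr) simp
  also have "\<dots> \<approx>\<^sub>S Comp (Id 2) (Comp (Id 2) DD)" by (rule bs, rule beq.trans, rule idl, simp, rule idl) simp
  also have "\<dots> \<approx>\<^sub>S Comp (Tens (Id 1) (Id 1)) (Comp (Id 2) DD)" by (rule cl, rule bs, rule Tid11)
  finally show ?case by (simp add: bp_def)
next
  case (step1 i)
  show ?case
  proof (rule D_step[OF _ _ DS Spow_S bp_succ _ step1.IH])
    show "Comp (Br 1 1) (Tens (Spow i) (Spow i)) \<approx>\<^sub>S Comp (Tens (Spow i) (Spow i)) (Br 1 1)"
      by (rule brnat) simp_all
  qed simp_all
next
  case (step2 i)
  show ?case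
  proof (rule D_step[OF _ _ DSi Spow_Si bp_pred _ step2.IH])
    show "Comp (BrInv 1 1) (Tens (Spow i) (Spow i)) \<approx>\<^sub>S Comp (Tens (Spow i) (Spow i)) (BrInv 1 1)"
      using brinvnat[where f="Spow i" and g="Spow i" and m=1 and m'=1 and n=1 and n'=1] by simp
  qed simp_all
qed

abbreviation "OP \<equiv> Gen (G0 G_OmP)"
abbreviation "OM \<equiv> Gen (G0 G_OmM)"
abbreviation "Om \<equiv> om (G0 G_OmP) (G0 G_OmM)"

fun ts :: "bool \<Rightarrow> genS tm \<Rightarrow> genS tm" where
  "ts True x = Tens x (Id 1)" | "ts False x = Tens (Id 1) x"

lemma tmty_ts[simp]: "tmty tyS x = Some (1, 1) \<Longrightarrow> tmty tyS (ts s x) = Some (2, 2)"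
  by (cases s) auto

lemma ts_cong: "x \<approx>\<^sub>S y \<Longrightarrow> ts s x \<approx>\<^sub>S ts s y"
  by (cases s) (auto intro: tl tr)

lemma tsc: assumes "tmty tyS x = Some (1, 1)" "tmty tyS y = Some (1, 1)"
  shows "Comp (ts s x) (ts s y) \<approx>\<^sub>S ts s (Comp x y)"
proof (cases s)
  case True
  have "Comp (Tens x (Id 1)) (Tens y (Id 1)) \<approx>\<^sub>S Tens (Comp x y) (Comp (Id 1) (Id 1))" by (rule ich) (simp add: assms)
  also have "\<dots> \<approx>\<^sub>S Tens (Comp x y) (Id 1)" by (rule tr, rule idl) simp
  finally show ?thesis using True by simp
next
  case False
  have "Comp (Tens (Id 1) x) (Tens (Id 1) y) \<approx>\<^sub>S Tens (Comp (Id 1) (Id 1)) (Comp x y)" by (rule ich) (simp add: assms)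
  also have "\<dots> \<approx>\<^sub>S Tens (Id 1) (Comp x y)" by (rule tl, rule idl) simp
  finally show ?thesis using False by simp
qed

lemma ts_Id: "ts s (Id 1) = Tens (Id 1) (Id 1)" by (cases s) auto

lemma rP: "Comp OP (ts s SS) \<approx>\<^sub>S OM" by (cases s; simp; rule rS; simp add: R_DS_def)
lemma rPi: "Comp OP (Tens Si (Id 1)) \<approx>\<^sub>S Comp OM (Br 1 1)" by (rule rS) (simp add: R_DS_def)

lemma mM: "Comp OM (ts s SS) \<approx>\<^sub>S Comp OP (Tens SS SS)"
proof -
  have "Comp OM (ts s SS) \<approx>\<^sub>S Comp (Comp OP (ts (\<not>s) SS)) (ts s SS)" by (rule cl, rule bs, rule rP)
  also have "\<dots> \<approx>\<^sub>S Comp OP (Comp (ts (\<not>s) SS) (ts s SS))" by (rule asc) (cases s; simp)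
  also have "\<dots> \<approx>\<^sub>S Comp OP (Tens SS SS)"
  proof (rule cr, cases s)
    case True
    have "Comp (Tens (Id 1) SS) (Tens SS (Id 1)) \<approx>\<^sub>S Tens (Comp (Id 1) SS) (Comp SS (Id 1))" by (rule ich) simp
    also have "\<dots> \<approx>\<^sub>S Tens SS SS" by (rule beq.tens_cong, rule idl, simp, rule idr) simp
    finally show "Comp (ts (\<not>s) SS) (ts s SS) \<approx>\<^sub>S Tens SS SS" using True by simp
  next
    case False
    have "Comp (Tens SS (Id 1)) (Tens (Id 1) SS) \<approx>\<^sub>S Tens (Comp SS (Id 1)) (Comp (Id 1) SS)" by (rule ich) simp
    also have "\<dots> \<approx>\<^sub>S Tens SS SS" by (rule beq.tens_cong, rule idr, simp, rule idl) simp
    finally show "Comp (ts (\<not>s) SS) (ts s SS) \<approx>\<^sub>S Tens SS SS" using False by simp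
  qed
  finally show ?thesis .
qed

lemma OPW: "OP \<approx>\<^sub>S Comp (Comp OP (Tens SS SS)) (Br 1 1)"
proof -
  have "OP \<approx>\<^sub>S Comp OP (Id 2)" by (rule bs, rule idr) simp
  also have "\<dots> \<approx>\<^sub>S Comp OP (Tens (Id 1) (Id 1))" by (rule cr, rule bs, rule Tid11)
  also have "\<dots> \<approx>\<^sub>S Comp OP (Tens (Comp Si SS) (Comp (Id 1) (Id 1)))"
    by (rule cr, rule beq.tens_cong, rule bs, rule SiS, rule bs, rule idl) simp
  also have "\<dots> \<approx>\<^sub>S Comp OP (Comp (Tens Si (Id 1)) (Tens SS (Id 1)))" by (rule cr, rule bs, rule ich) simp
  also have "\<dots> \<approx>\<^sub>S Comp (Comp OP (Tens Si (Id 1))) (Tens SS (Id 1))" by (rule bs, rule asc) simp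
  also have "\<dots> \<approx>\<^sub>S Comp (Comp OM (Br 1 1)) (Tens SS (Id 1))" by (rule cl, rule rPi)
  also have "\<dots> \<approx>\<^sub>S Comp OM (Comp (Br 1 1) (Tens SS (Id 1)))" by (rule asc) simp
  also have "\<dots> \<approx>\<^sub>S Comp OM (Comp (Tens (Id 1) SS) (Br 1 1))" by (rule cr, rule brnat) simp_all
  also have "\<dots> \<approx>\<^sub>S Comp (Comp OM (Tens (Id 1) SS)) (Br 1 1)" by (rule bs, rule asc) simp
  also have "\<dots> \<approx>\<^sub>S Comp (Comp OP (Tens SS SS)) (Br 1 1)" by (rule cl) (use mM[of False] in simp)
  finally show ?thesis .
qed

lemma mM': "Comp OM (ts s SS) \<approx>\<^sub>S Comp OP (BrInv 1 1)"
proof -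
  let ?W = "Comp OP (Tens SS SS)"
  have "Comp OP (BrInv 1 1) \<approx>\<^sub>S Comp (Comp ?W (Br 1 1)) (BrInv 1 1)" by (rule cl, rule OPW)
  also have "\<dots> \<approx>\<^sub>S Comp ?W (Comp (Br 1 1) (BrInv 1 1))" by (rule asc) simp
  also have "\<dots> \<approx>\<^sub>S Comp ?W (Id 2)" by (rule cr, rule BrBrInv)
  also have "\<dots> \<approx>\<^sub>S ?W" by (rule idr) simp
  finally show ?thesis using mM by (meson bs beq.trans)
qed

lemma bp_ts: "Comp (bp p) (ts s SS) \<approx>\<^sub>S Comp (ts (if even p then s else \<not> s) SS) (bp p)"
  using bp_nat[where ty=tyS and R=R_DS and f=SS and g="Id 1" and a=p]
    bp_nat[where ty=tyS and R=R_DS and f="Id 1" and g=SS and a=p]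
  by (cases s) auto

lemma OmS: "Comp (Om j) (ts s SS) \<approx>\<^sub>S Om (j + 1)"
proof -
  define p where "p = - (j div 2)"
  define s' where "s' = (if even p then s else \<not> s)"
  let ?b = "Gen (if even j then G0 G_OmP else G0 G_OmM)"
  have "Comp (Om j) (ts s SS) = Comp (Comp ?b (bp p)) (ts s SS)" by (simp add: om_def p_def)
  also have "\<dots> \<approx>\<^sub>S Comp ?b (Comp (bp p) (ts s SS))" by (rule asc) (cases s; simp)
  also have "\<dots> \<approx>\<^sub>S Comp ?b (Comp (ts s' SS) (bp p))" by (rule cr) (simp add: s'_def bp_ts)
  also have "\<dots> \<approx>\<^sub>S Comp (Comp ?b (ts s' SS)) (bp p)" by (rule bs, rule asc) (cases s'; simp)
  also have "\<dots> \<approx>\<^sub>S Om (j + 1)"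
  proof (cases "even j")
    case True
    then have "(j + 1) div 2 = j div 2" "odd (j + 1)" by presburger+
    then have e: "Om (j+1) = Comp OM (bp p)" by (simp add: om_def p_def)
    have hb: "(if even j then G0 G_OmP else G0 G_OmM) = G0 G_OmP" using True by simp
    show ?thesis unfolding e hb by (rule cl, rule rP)
  next
    case False
    then have "(j + 1) div 2 = j div 2 + 1" "even (j + 1)" by presburger+
    then have e: "Om (j+1) = Comp OP (bp (p - 1))" by (simp add: om_def p_def)
    have "Comp (Comp OM (ts s' SS)) (bp p) \<approx>\<^sub>S Comp (Comp OP (BrInv 1 1)) (bp p)" by (rule cl, rule mM')
    also have "\<dots> \<approx>\<^sub>S Comp OP (Comp (BrInv 1 1) (bp p))" by (rule asc) simp
    also have "\<dots> \<approx>\<^sub>S Comp OP (bp (p - 1))" by (rule cr, rule bp_pred)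
    finally have X: "Comp (Comp OM (ts s' SS)) (bp p) \<approx>\<^sub>S Comp OP (bp (p - 1))" .
    have hb: "(if even j then G0 G_OmP else G0 G_OmM) = G0 G_OmM" using False by simp
    show ?thesis unfolding e hb by (rule X)
  qed
  finally show ?thesis .
qed

lemma tmty_OO[simp]: "tmty tyS (Om j) = Some (2, 0)" by simp

lemma OmSi: "Comp (Om j) (ts s Si) \<approx>\<^sub>S Om (j - 1)"
proof -
  have "Comp (Om j) (ts s Si) \<approx>\<^sub>S Comp (Comp (Om (j - 1)) (ts s SS)) (ts s Si)"
    by (rule cl, rule bs) (use OmS[of "j - 1" s] in simp)
  also have "\<dots> \<approx>\<^sub>S Comp (Om (j - 1)) (Comp (ts s SS) (ts s Si))" by (rule asc) (cases s; simp)
  also have "\<dots> \<approx>\<^sub>S Comp (Om (j - 1)) (ts s (Comp SS Si))" by (rule cr, rule tsc) simp_all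
  also have "\<dots> \<approx>\<^sub>S Comp (Om (j - 1)) (ts s (Id 1))" by (rule cr, rule ts_cong, rule SSi)
  also have "\<dots> \<approx>\<^sub>S Om (j - 1)" unfolding ts_Id by (rule om_Tid) simp
  finally show ?thesis .
qed

lemma Om_Spow: "Comp (Om j) (ts s (Spow a)) \<approx>\<^sub>S Om (j + a)"
proof (induction a arbitrary: j rule: int_induct[where k=0])
  case base
  show ?case unfolding Spow0 ts_Id add_0_right by (rule om_Tid) simp
next
  case (step1 i)
  have "Comp (Om j) (ts s (Spow (i+1))) \<approx>\<^sub>S Comp (Om j) (ts s (Comp SS (Spow i)))"
    by (rule cr, rule ts_cong, rule bs, rule Spow_S)
  also have "\<dots> \<approx>\<^sub>S Comp (Om j) (Comp (ts s SS) (ts s (Spow i)))" by (rule cr, rule bs, rule tsc) simp_all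
  also have "\<dots> \<approx>\<^sub>S Comp (Comp (Om j) (ts s SS)) (ts s (Spow i))" by (rule bs, rule asc) (cases s; simp)
  also have "\<dots> \<approx>\<^sub>S Comp (Om (j + 1)) (ts s (Spow i))" by (rule cl, rule OmS)
  also have "\<dots> \<approx>\<^sub>S Om (j + 1 + i)" by (rule step1.IH)
  finally show ?case by (simp add: algebra_simps)
next
  case (step2 i)
  have "Comp (Om j) (ts s (Spow (i-1))) \<approx>\<^sub>S Comp (Om j) (ts s (Comp Si (Spow i)))"
    by (rule cr, rule ts_cong, rule bs, rule Spow_Si)
  also have "\<dots> \<approx>\<^sub>S Comp (Om j) (Comp (ts s Si) (ts s (Spow i)))" by (rule cr, rule bs, rule tsc) simp_all
  also have "\<dots> \<approx>\<^sub>S Comp (Comp (Om j) (ts s Si)) (ts s (Spow i))" by (rule bs, rule asc) (cases s; simp)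
  also have "\<dots> \<approx>\<^sub>S Comp (Om (j - 1)) (ts s (Spow i))" by (rule cl, rule OmSi)
  also have "\<dots> \<approx>\<^sub>S Om (j - 1 + i)" by (rule step2.IH)
  finally show ?case by (simp add: algebra_simps)
qed

lemma Om_Spow2: "Comp (Om j) (Tens (Spow x) (Spow y)) \<approx>\<^sub>S Om (j + x + y)"
proof -
  have "Comp (Om j) (Tens (Spow x) (Spow y)) \<approx>\<^sub>S Comp (Om j) (Tens (Comp (Spow x) (Id 1)) (Comp (Id 1) (Spow y)))"
    by (rule cr, rule beq.tens_cong, rule bs, rule idr, simp, rule bs, rule idl) simp
  also have "\<dots> \<approx>\<^sub>S Comp (Om j) (Comp (ts True (Spow x)) (ts False (Spow y)))" by (rule cr, rule bs, simp, rule ich) simp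
  also have "\<dots> \<approx>\<^sub>S Comp (Comp (Om j) (ts True (Spow x))) (ts False (Spow y))" by (rule bs, rule asc) simp
  also have "\<dots> \<approx>\<^sub>S Comp (Om (j + x)) (ts False (Spow y))" by (rule cl, rule Om_Spow)
  also have "\<dots> \<approx>\<^sub>S Om (j + x + y)" by (rule Om_Spow)
  finally show ?thesis .
qed

lemma map_om: "map_tm G0 (om G_OmP G_OmM j) = om (G0 G_OmP) (G0 G_OmM) j"
  by (simp add: om_def map_bp)

lemma gen_sound:
  assumes "tyS g = (a, b)" "length v = a"
  shows "Comp (Gen g) (svec v) \<approx>\<^sub>S Comp (svec (fst (pg v g))) (map_tm G0 (snd (pg v g)))"
proof -
  have k1: "\<exists>x. v = [x]" if "a = 1" using assms(2) that by (cases v; cases "tl v") auto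
  have k2: "\<exists>x y. v = [x, y]" if "a = 2" using assms(2) that
    by (cases v; cases "tl v"; cases "tl (tl v)") (auto simp: numeral_2_eq_2)
  have eps: "Comp (Gen (G0 h)) (svec [x]) \<approx>\<^sub>S Comp (svec []) (map_tm G0 (Gen h))"
    if "h \<in> {G_Eps, G_ThP, G_ThM}" for h x
  proof -
    have t: "tyS (G0 h) = (1, 0)" and t0: "ty0 h = (1, 0)" using that by auto
    have r: "Comp (Gen (G0 h)) SS \<approx>\<^sub>S Gen (G0 h)" by (rule rS) (use that in \<open>auto simp: R_DS_def\<close>)
    have "Comp (Gen (G0 h)) (svec [x]) \<approx>\<^sub>S Comp (Gen (G0 h)) (Spow x)" by (rule cr, rule svec1)
    also have "\<dots> \<approx>\<^sub>S Gen (G0 h)" by (rule eps_Spow[OF t r])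
    also have "\<dots> \<approx>\<^sub>S Comp (Id 0) (Gen (G0 h))" by (rule bs, rule idl) (simp add: t0)
    finally show ?thesis by simp
  qed
  show ?thesis
  proof (cases g)
    case (G0 h)
    show ?thesis
    proof (cases h)
      case G_Delta
      then obtain x where v: "v = [x]" using k1 assms G0 by auto
      have "Comp DD (svec [x]) \<approx>\<^sub>S Comp DD (Spow x)" by (rule cr, rule svec1)
      also have "\<dots> \<approx>\<^sub>S Comp (Tens (Spow x) (Spow x)) (Comp (bp x) DD)" by (rule D_Spow)
      also have "\<dots> \<approx>\<^sub>S Comp (svec [x, x]) (Comp (bp x) DD)" by (rule cl, rule bs, rule svec2)
      finally show ?thesis using G0 G_Delta v by (simp add: map_bp)
    next
      case G_Eps
      then obtain x where v: "v = [x]" using k1 assms G0 by auto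
      show ?thesis using eps[of h x] G0 G_Eps v by simp
    next
      case G_ThP
      then obtain x where v: "v = [x]" using k1 assms G0 by auto
      show ?thesis using eps[of h x] G0 G_ThP v by simp
    next
      case G_ThM
      then obtain x where v: "v = [x]" using k1 assms G0 by auto
      show ?thesis using eps[of h x] G0 G_ThM v by simp
    next
      case G_OmP
      then obtain x y where v: "v = [x, y]" using k2 assms G0 by auto
      have "Comp OP (svec [x, y]) \<approx>\<^sub>S Comp OP (Tens (Spow x) (Spow y))" by (rule cr, rule svec2)
      also have "\<dots> \<approx>\<^sub>S Comp (Om 0) (Tens (Spow x) (Spow y))"
        by (rule cl, rule bs, simp add: om_def bp_def, rule idr) simp
      also have "\<dots> \<approx>\<^sub>S Om (0 + x + y)" by (rule Om_Spow2)
      also have "\<dots> \<approx>\<^sub>S Comp (Id 0) (Om (x + y))" by (simp, rule bs, rule idl) simp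
      finally show ?thesis using G0 G_OmP v by (simp add: map_om)
    next
      case G_OmM
      then obtain x y where v: "v = [x, y]" using k2 assms G0 by auto
      have "Comp OM (svec [x, y]) \<approx>\<^sub>S Comp OM (Tens (Spow x) (Spow y))" by (rule cr, rule svec2)
      also have "\<dots> \<approx>\<^sub>S Comp (Om 1) (Tens (Spow x) (Spow y))"
        by (rule cl, rule bs, simp add: om_def bp_def, rule idr) simp
      also have "\<dots> \<approx>\<^sub>S Om (1 + x + y)" by (rule Om_Spow2)
      also have "\<dots> \<approx>\<^sub>S Comp (Id 0) (Om (x + y + 1))" by (rule bs, rule beq.trans, rule idl, simp) (simp add: algebra_simps beq.refl)
      finally show ?thesis using G0 G_OmM v by (simp add: map_om)
    qed
  next
    case G_S
    then obtain x where v: "v = [x]" using k1 assms by auto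
    have "Comp SS (svec [x]) \<approx>\<^sub>S Comp SS (Spow x)" by (rule cr, rule svec1)
    also have "\<dots> \<approx>\<^sub>S Spow (x + 1)" by (rule Spow_S)
    also have "\<dots> \<approx>\<^sub>S svec [x + 1]" by (rule bs, rule svec1)
    also have "\<dots> \<approx>\<^sub>S Comp (svec [x + 1]) (Id 1)" by (rule bs, rule idr) simp
    finally show ?thesis using G_S v by simp
  next
    case G_Sinv
    then obtain x where v: "v = [x]" using k1 assms by auto
    have "Comp Si (svec [x]) \<approx>\<^sub>S Comp Si (Spow x)" by (rule cr, rule svec1)
    also have "\<dots> \<approx>\<^sub>S Spow (x - 1)" by (rule Spow_Si)
    also have "\<dots> \<approx>\<^sub>S svec [x - 1]" by (rule bs, rule svec1)
    also have "\<dots> \<approx>\<^sub>S Comp (svec [x - 1]) (Id 1)" by (rule bs, rule idr) simp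
    finally show ?thesis using G_Sinv v by simp
  qed
qed


lemma map_Tens: "map_tm G0 (Tens a b) = Tens (map_tm G0 a) (map_tm G0 b)" by simp

lemma sound:
  "tmty tyS t = Some (a, b) \<Longrightarrow> length v = a \<Longrightarrow>
   Comp t (svec v) \<approx>\<^sub>S Comp (svec (fst (pushS v t))) (map_tm G0 (snd (pushS v t)))"
proof (induction t arbitrary: a b v)
  case (Gen g)
  then show ?case using gen_sound[of g a b v] by simp
next
  case (Id n)
  then have "a = n" "b = n" by auto
  have "Comp (Id n) (svec v) \<approx>\<^sub>S svec v" by (rule idl) (use Id in simp)
  also have "svec v \<approx>\<^sub>S Comp (svec v) (Id n)" by (rule bs, rule idr) (use Id in simp)
  finally show ?case by simp
next
  case (Comp f g)
  from Comp.prems(1) obtain c where g: "tmty tyS g = Some (a, c)" and f: "tmty tyS f = Some (c, b)"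
    by (rule tmty_Comp_E)
  define p where "p = pushS v g"
  define q where "q = pushS (fst p) f"
  have tp: "length (fst p) = c" "tmty ty0 (snd p) = Some (a, c)"
    using pushS_ty[OF g Comp.prems(2)] unfolding p_def by auto
  have tq: "length (fst q) = b" "tmty ty0 (snd q) = Some (c, b)"
    using pushS_ty[OF f tp(1)] unfolding q_def by auto
  have "Comp (Comp f g) (svec v) \<approx>\<^sub>S Comp f (Comp g (svec v))" by (rule asc) (simp add: f g Comp.prems)
  also have "\<dots> \<approx>\<^sub>S Comp f (Comp (svec (fst p)) (map_tm G0 (snd p)))"
    by (rule cr) (use Comp.IH(2)[OF g Comp.prems(2)] in \<open>simp add: p_def\<close>)
  also have "\<dots> \<approx>\<^sub>S Comp (Comp f (svec (fst p))) (map_tm G0 (snd p))"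
    by (rule bs, rule asc) (simp add: f tp tmty_map)
  also have "\<dots> \<approx>\<^sub>S Comp (Comp (svec (fst q)) (map_tm G0 (snd q))) (map_tm G0 (snd p))"
    by (rule cl) (use Comp.IH(1)[OF f tp(1)] in \<open>simp add: q_def\<close>)
  also have "\<dots> \<approx>\<^sub>S Comp (svec (fst q)) (Comp (map_tm G0 (snd q)) (map_tm G0 (snd p)))"
    by (rule asc) (simp add: tq tp tmty_map)
  finally show ?case by (simp add: Let_def p_def[symmetric] q_def[symmetric])
next
  case (Tens f g)
  from Tens.prems(1) obtain a1 b1 a2 b2 where f: "tmty tyS f = Some (a1, b1)" and g: "tmty tyS g = Some (a2, b2)"
    and ab: "a = a1 + a2" "b = b1 + b2" by (rule tmty_Tens_E)
  have sf: "src tyS f = a1" by (rule tmty_src[OF f])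
  define v1 where "v1 = take a1 v"
  define v2 where "v2 = drop a1 v"
  have lv: "length v1 = a1" "length v2 = a2" using Tens.prems(2) ab unfolding v1_def v2_def by auto
  define p where "p = pushS v1 f"
  define q where "q = pushS v2 g"
  have tp: "length (fst p) = b1" "tmty ty0 (snd p) = Some (a1, b1)"
    using pushS_ty[OF f lv(1)] unfolding p_def by auto
  have tq: "length (fst q) = b2" "tmty ty0 (snd q) = Some (a2, b2)"
    using pushS_ty[OF g lv(2)] unfolding q_def by auto
  have "Comp (Tens f g) (svec v) \<approx>\<^sub>S Comp (Tens f g) (Tens (svec v1) (svec v2))"
    by (rule cr) (use svec_app[of v1 v2] in \<open>simp add: v1_def v2_def\<close>)
  also have "\<dots> \<approx>\<^sub>S Tens (Comp f (svec v1)) (Comp g (svec v2))" by (rule ich) (simp add: f g lv)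
  also have "\<dots> \<approx>\<^sub>S Tens (Comp (svec (fst p)) (map_tm G0 (snd p))) (Comp (svec (fst q)) (map_tm G0 (snd q)))"
    by (rule beq.tens_cong) (use Tens.IH(1)[OF f lv(1)] Tens.IH(2)[OF g lv(2)] in \<open>simp_all add: p_def q_def\<close>)
  also have "\<dots> \<approx>\<^sub>S Comp (Tens (svec (fst p)) (svec (fst q))) (Tens (map_tm G0 (snd p)) (map_tm G0 (snd q)))"
    by (rule bs, rule ich) (simp add: tp tq tmty_map)
  also have "\<dots> \<approx>\<^sub>S Comp (svec (fst p @ fst q)) (Tens (map_tm G0 (snd p)) (map_tm G0 (snd q)))"
    by (rule cl, rule bs, rule svec_app)
  finally show ?case by (simp add: Let_def sf p_def[symmetric] q_def[symmetric] v1_def[symmetric] v2_def[symmetric])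
next
  case (Br m n)
  then have len: "length v = m + n" by auto
  define x where "x = take m v"
  define y where "y = drop m v"
  have v: "v = x @ y" "length x = m" "length y = n" using len unfolding x_def y_def by auto
  have "Comp (Br m n) (svec v) \<approx>\<^sub>S Comp (Br m n) (Tens (svec x) (svec y))" unfolding v(1) by (rule cr, rule svec_app)
  also have "\<dots> \<approx>\<^sub>S Comp (Tens (svec y) (svec x)) (Br m n)" by (rule brnat) (simp_all add: v)
  also have "\<dots> \<approx>\<^sub>S Comp (svec (y @ x)) (Br m n)" by (rule cl, rule bs, rule svec_app)
  finally show ?case using v by simp
next
  case (BrInv m n)
  then have len: "length v = n + m" by auto
  define y where "y = take n v"
  define x where "x = drop n v"
  have v: "v = y @ x" "length x = m" "length y = n" using len unfolding x_def y_def by auto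
  have "Comp (BrInv m n) (svec v) \<approx>\<^sub>S Comp (BrInv m n) (Tens (svec y) (svec x))" unfolding v(1) by (rule cr, rule svec_app)
  also have "\<dots> \<approx>\<^sub>S Comp (Tens (svec x) (svec y)) (BrInv m n)" by (rule brinvnat) (simp_all add: v)
  also have "\<dots> \<approx>\<^sub>S Comp (svec (x @ y)) (BrInv m n)" by (rule cl, rule bs, rule svec_app)
  finally show ?case using v by simp
qed

lemma Zlem:
  "tmty ty0 s = Some (a, b) \<Longrightarrow>
   fst (pushS (replicate a 0) (map_tm G0 s)) = replicate b 0 \<and> snd (pushS (replicate a 0) (map_tm G0 s)) \<approx>\<^sub>D s"
proof (induction s arbitrary: a b)
  case (Gen g)
  show ?case
  proof (cases g)
    case G_Delta
    have ab: "a = 1" "b = 2" using Gen G_Delta by auto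
    have "Comp (Id 2) (Gen G_Delta) \<approx>\<^sub>D Gen G_Delta" by (rule idl) simp
    then show ?thesis using G_Delta ab by (simp add: bp_def numeral_2_eq_2)
  next
    case G_OmP
    have ab: "a = 2" "b = 0" using Gen G_OmP by auto
    have "Comp (Gen G_OmP) (Id 2) \<approx>\<^sub>D Gen G_OmP" by (rule idr) simp
    then show ?thesis using G_OmP ab by (simp add: bp_def om_def numeral_2_eq_2)
  next
    case G_OmM
    have ab: "a = 2" "b = 0" using Gen G_OmM by auto
    have "Comp (Gen G_OmM) (Id 2) \<approx>\<^sub>D Gen G_OmM" by (rule idr) simp
    then show ?thesis using G_OmM ab by (simp add: bp_def om_def numeral_2_eq_2)
  qed (use Gen in \<open>auto intro: beq.refl\<close>)
next
  case (Id n)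
  then show ?case by (auto intro: beq.refl)
next
  case (Comp f g)
  from Comp.prems(1) obtain c where g: "tmty ty0 g = Some (a, c)" and f: "tmty ty0 f = Some (c, b)"
    by (rule tmty_Comp_E)
  show ?case using Comp.IH(2)[OF g] Comp.IH(1)[OF f] by (auto simp: Let_def intro: beq.comp_cong)
next
  case (Tens f g)
  from Tens.prems(1) obtain a1 b1 a2 b2 where f: "tmty ty0 f = Some (a1, b1)" and g: "tmty ty0 g = Some (a2, b2)"
    and ab: "a = a1 + a2" "b = b1 + b2" by (rule tmty_Tens_E)
  have sf: "src tyS (map_tm G0 f) = a1" using tmty_src[OF f] by (simp add: src_map)
  show ?case using Tens.IH(1)[OF f] Tens.IH(2)[OF g] ab sf
    by (auto simp: Let_def replicate_add intro: beq.tens_cong)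
next
  case (Br m n)
  then show ?case by (auto simp: replicate_add[symmetric] add.commute intro: beq.refl)
next
  case (BrInv m n)
  then show ?case by (auto simp: replicate_add[symmetric] add.commute intro: beq.refl)
qed

lemma map_resp: "s \<approx>\<^sub>D t \<Longrightarrow> map_tm G0 s \<approx>\<^sub>S map_tm G0 t"
proof (induction rule: beq.induct)
  case (rel s t)
  have "(map_tm G0 s, map_tm G0 t) \<in> R_DS"
    using rel unfolding R_D_def R_DS_def coalg_rels_def by (elim insertE emptyE) simp_all
  then show ?case by (rule rS)
next
  case (refl t)
  then show ?case by (rule beq.refl)
next
  case (sym s t)
  show ?case by (rule beq.sym[OF sym.IH])
next
  case (trans s t u)
  show ?case by (rule beq.trans[OF trans.IH])
next
  case (comp_cong s s' t t')
  show ?case by (simp only: tm.map, rule beq.comp_cong[OF comp_cong.IH])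
next
  case (tens_cong s s' t t')
  show ?case by (simp only: tm.map, rule beq.tens_cong[OF tens_cong.IH])
next
  case (id_l f n m)
  show ?case by (simp, rule beq.id_l) (simp_all add: tmty_map id_l.hyps)
next
  case (id_r f n m)
  show ?case by (simp, rule beq.id_r) (simp_all add: tmty_map id_r.hyps)
next
  case (assoc f c d g b h a)
  show ?case by (simp, rule beq.assoc) (simp_all add: tmty_map assoc.hyps)
next
  case (tens_assoc f g h)
  show ?case by (simp, rule beq.tens_assoc)
next
  case (tens_unit_l f)
  show ?case by (simp, rule beq.tens_unit_l)
next
  case (tens_unit_r f)
  show ?case by (simp, rule beq.tens_unit_r)
next
  case (tens_id m n)
  show ?case by (simp, rule beq.tens_id)
next
  case (interchange f b c f' a g e k g' d)
  show ?case by (simp, rule beq.interchange) (simp_all add: tmty_map interchange.hyps)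
next
  case (br_inv1 m n)
  show ?case by (simp, rule beq.br_inv1)
next
  case (br_inv2 m n)
  show ?case by (simp, rule beq.br_inv2)
next
  case (br_nat f m m' g n n')
  show ?case by (simp, rule beq.br_nat) (simp_all add: tmty_map br_nat.hyps)
next
  case (hex1 l m n)
  show ?case by (simp, rule beq.hex1)
next
  case (hex2 l m n)
  show ?case by (simp, rule beq.hex2)
qed

lemma map_dpow: "map_tm G0 (dpow G_Delta n) = dpow (G0 G_Delta) n" by (induction n) auto
lemma map_epow: "map_tm G0 (epow G_Eps n) = epow (G0 G_Eps) n" by (induction n) auto

lemma svec_zero: "svec (replicate n 0) \<approx>\<^sub>S Id n"
proof (induction n)
  case 0 then show ?case by (simp add: beq.refl)
next
  case (Suc n)
  have "svec (replicate (Suc n) 0) \<approx>\<^sub>S Tens (Id 1) (Id n)" by (simp, rule tr, rule Suc.IH)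
  also have "\<dots> \<approx>\<^sub>S Id (Suc n)" using beq.tens_id[of tyS R_DS 1 n] by simp
  finally show ?case .
qed

definition cls :: "('g \<Rightarrow> nat \<times> nat) \<Rightarrow> ('g tm \<times> 'g tm) set \<Rightarrow> 'g tm \<Rightarrow> 'g tm set" where
  "cls ty R s = {t. beq ty R s t}"

lemma Hom_iff: "X \<in> Hom ty R n m \<longleftrightarrow> (\<exists>s. tmty ty s = Some (n, m) \<and> X = cls ty R s)"
  unfolding Hom_def quotient_def cls_def by auto

lemma cls_eq: "beq ty R s t \<Longrightarrow> cls ty R s = cls ty R t"
  unfolding cls_def by (auto intro: beq.trans beq.sym)

lemma cls_eq_iff: "cls ty R s = cls ty R t \<longleftrightarrow> beq ty R s t"
proof
  assume "cls ty R s = cls ty R t"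
  then have "t \<in> cls ty R s" unfolding cls_def by (auto intro: beq.refl)
  then show "beq ty R s t" unfolding cls_def by simp
qed (rule cls_eq)

lemma iota_cls: "iota (cls ty0 R_D s) = cls tyS R_DS (map_tm G0 s)"
  unfolding iota_def cls_def by (auto intro: beq.refl beq.trans map_resp)

lemma conv_comp_cls: "conv_comp ty R d n (cls ty R f) (cls ty R g) = cls ty R (Comp (Tens f g) (dpow d n))"
proof -
  have "beq ty R (Comp (Tens f g) (dpow d n)) x"
    if "beq ty R f fa" "beq ty R g ga" "beq ty R (Comp (Tens fa ga) (dpow d n)) x" for x fa ga
    by (rule beq.trans[OF beq.comp_cong[OF beq.tens_cong[OF that(1,2)] beq.refl] that(3)])
  then show ?thesis unfolding conv_comp_def cls_def by (auto intro: beq.refl)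
qed

lemma conv_id_cls: "conv_id ty R e n = cls ty R (epow e n)"
  unfolding conv_id_def cls_def by simp

lemma inj_part:
  assumes s: "tmty ty0 s = Some (n, 0)" and t: "tmty ty0 t = Some (n, 0)"
  and h: "map_tm G0 s \<approx>\<^sub>S map_tm G0 t"
  shows "s \<approx>\<^sub>D t"
proof -
  have ts: "tmty tyS (map_tm G0 s) = Some (n, 0)" using s by (simp add: tmty_map)
  have r: "snd (pushS (replicate n 0) (map_tm G0 s)) \<approx>\<^sub>D snd (pushS (replicate n 0) (map_tm G0 t))"
    using pushS_resp[OF h ts, of "replicate n 0"] by simp
  have z1: "snd (pushS (replicate n 0) (map_tm G0 s)) \<approx>\<^sub>D s" using Zlem[OF s] by simp
  have z2: "snd (pushS (replicate n 0) (map_tm G0 t)) \<approx>\<^sub>D t" using Zlem[OF t] by simp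
  show ?thesis by (rule beq.trans[OF beq.trans[OF bs[OF z1] r] z2])
qed

lemma surj_part:
  assumes t: "tmty tyS t = Some (n, 0)"
  shows "\<exists>s. tmty ty0 s = Some (n, 0) \<and> t \<approx>\<^sub>S map_tm G0 s"
proof -
  define p where "p = pushS (replicate n 0) t"
  have tp: "length (fst p) = 0" "tmty ty0 (snd p) = Some (n, 0)"
    using pushS_ty[OF t, of "replicate n 0"] unfolding p_def by auto
  have "t \<approx>\<^sub>S Comp t (Id n)" by (rule bs, rule idr) (simp add: t)
  also have "\<dots> \<approx>\<^sub>S Comp t (svec (replicate n 0))" by (rule cr, rule bs, rule svec_zero)
  also have "\<dots> \<approx>\<^sub>S Comp (svec (fst p)) (map_tm G0 (snd p))" unfolding p_def by (rule sound[OF t]) simp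
  also have "\<dots> \<approx>\<^sub>S map_tm G0 (snd p)"
  proof -
    have e: "fst p = []" using tp by simp
    show ?thesis unfolding e svec.simps(1) by (rule idl) (simp add: tmty_map tp)
  qed
  finally show ?thesis using tp by blast
qed

theorem theorem1p1:
  fixes n :: nat
  shows "bij_betw iota (EndD n) (EndDS n)
       \<and> (\<forall>X\<in>EndD n. \<forall>Y\<in>EndD n. iota (compD n X Y) = compDS n (iota X) (iota Y))
       \<and> iota (idD n) = idDS n"
proof (intro conjI ballI)
  show "bij_betw iota (EndD n) (EndDS n)"
  proof (rule bij_betw_imageI)
    show "inj_on iota (EndD n)"
    proof (rule inj_onI)
      fix X Y assume X: "X \<in> EndD n" and Y: "Y \<in> EndD n" and e: "iota X = iota Y"
      obtain s where s: "tmty ty0 s = Some (n, 0)" "X = cls ty0 R_D s" using X unfolding EndD_def Hom_iff by auto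
      obtain t where t: "tmty ty0 t = Some (n, 0)" "Y = cls ty0 R_D t" using Y unfolding EndD_def Hom_iff by auto
      have "map_tm G0 s \<approx>\<^sub>S map_tm G0 t" using e s t by (simp add: iota_cls cls_eq_iff)
      then have "s \<approx>\<^sub>D t" by (rule inj_part[OF s(1) t(1)])
      then show "X = Y" using s t by (simp add: cls_eq)
    qed
  next
    show "iota ` EndD n = EndDS n"
    proof
      show "iota ` EndD n \<subseteq> EndDS n"
      proof
        fix Y assume "Y \<in> iota ` EndD n"
        then obtain X where X: "X \<in> EndD n" "Y = iota X" by auto
        then obtain s where s: "tmty ty0 s = Some (n, 0)" "Y = iota (cls ty0 R_D s)"
          unfolding EndD_def Hom_iff by auto
        then show "Y \<in> EndDS n" unfolding EndDS_def Hom_iff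
          by (intro exI[of _ "map_tm G0 s"]) (simp add: iota_cls tmty_map)
      qed
    next
      show "EndDS n \<subseteq> iota ` EndD n"
      proof
        fix Y assume "Y \<in> EndDS n"
        then obtain t where t: "tmty tyS t = Some (n, 0)" "Y = cls tyS R_DS t" unfolding EndDS_def Hom_iff by auto
        obtain s where s: "tmty ty0 s = Some (n, 0)" "t \<approx>\<^sub>S map_tm G0 s" using surj_part[OF t(1)] by blast
        have "Y = iota (cls ty0 R_D s)" using t s by (simp add: iota_cls cls_eq)
        moreover have "cls ty0 R_D s \<in> EndD n" unfolding EndD_def Hom_iff using s by auto
        ultimately show "Y \<in> iota ` EndD n" by blast
      qed
    qed
  qed
next
  fix X Y assume X: "X \<in> EndD n" and Y: "Y \<in> EndD n"
  obtain s where s: "X = cls ty0 R_D s" using X unfolding EndD_def Hom_iff by auto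
  obtain t where t: "Y = cls ty0 R_D t" using Y unfolding EndD_def Hom_iff by auto
  show "iota (compD n X Y) = compDS n (iota X) (iota Y)"
    unfolding s t compD_def compDS_def conv_comp_cls iota_cls by (simp add: map_dpow)
next
  show "iota (idD n) = idDS n"
    unfolding idD_def idDS_def conv_id_cls iota_cls by (simp add: map_epow)
qed

end
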